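(* For every positive integer $n$, the set $\mathcal{L}_n$ is a closed subset of $\mathbb{R}$.
   Context: For an irrational real $\xi$ and positive integer $n$, $\lambda_n(\xi) = \limsup_{s/t \to \xi} \dfrac{\gcd(t,n)}{t^2 \left| \frac{s}{t} - \xi\right|}$ (limsup over rationals $s/t$, $t>0$, tending to $\xi$), and $\mathcal{L}_n = \{\lambda_n(\xi)\in\mathbb{R} : \xi\in\mathbb{R}\setminus\mathbb{Q}\}$. *)

theory Defs
  imports "HOL-Analysis.Analysis" "HOL-Library.Extended_Real"
begin

definition approx_quot :: "nat \<Rightarrow> real \<Rightarrow> int \<Rightarrow> int \<Rightarrow> real" where
  "approx_quot n xi s t =
     real_of_int (gcd t (int n)) / ((real_of_int t)^2 * \<bar>real_of_int s / real_of_int t - xi\<bar>)"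

text \<open>lambda_n(xi): limsup, as the rational s/t (t > 0) tends to xi, of approx_quot;
  valued in the extended reals (it may be infinite).\<close>
definition lambda_n :: "nat \<Rightarrow> real \<Rightarrow> ereal" where
  "lambda_n n xi =
     (INF d\<in>{d::real. d > 0}.
        SUP st\<in>{(s::int, t::int). t > 0 \<and> 0 < \<bar>real_of_int s / real_of_int t - xi\<bar>
                                  \<and> \<bar>real_of_int s / real_of_int t - xi\<bar> < d}.
          ereal (approx_quot n xi (fst st) (snd st)))"

definition L_set :: "nat \<Rightarrow> real set" where
  "L_set n = {x. \<exists>xi. xi \<notin> \<rat> \<and> lambda_n n xi = ereal x}"

end

theory Submission
  imports Defs
begin

definition hh :: "int \<Rightarrow> real \<Rightarrow> real" where "hh a x = 1 / (real_of_int a + x)"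

definition cfs :: "real \<Rightarrow> (nat \<Rightarrow> int) \<Rightarrow> (nat \<Rightarrow> real) \<Rightarrow> bool" where
 "cfs xi c tau \<longleftrightarrow> (\<forall>k\<ge>1. 1 \<le> c k \<and> 0 < tau k \<and> tau k < 1 \<and> tau k = hh (c k) (tau (Suc k)))
      \<and> xi = real_of_int (c 0) + tau 1"

lemma cfs_c: "cfs xi c tau \<Longrightarrow> 1 \<le> k \<Longrightarrow> 1 \<le> c k"
  unfolding cfs_def by blast
lemma cfs_c1: "cfs xi c tau \<Longrightarrow> \<forall>k\<ge>1. 1 \<le> c k"
  unfolding cfs_def by blast
lemma cfs_pos: "cfs xi c tau \<Longrightarrow> 1 \<le> k \<Longrightarrow> 0 < tau k"
  unfolding cfs_def by blast
lemma cfs_lt1: "cfs xi c tau \<Longrightarrow> 1 \<le> k \<Longrightarrow> tau k < 1"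
  unfolding cfs_def by blast
lemma cfs_rec: "cfs xi c tau \<Longrightarrow> 1 \<le> k \<Longrightarrow> tau k = hh (c k) (tau (Suc k))"
  unfolding cfs_def by blast
lemma cfs_xi: "cfs xi c tau \<Longrightarrow> xi = real_of_int (c 0) + tau 1"
  unfolding cfs_def by blast

fun QQ :: "(nat \<Rightarrow> int) \<Rightarrow> nat \<Rightarrow> int" where
 "QQ c 0 = 0" | "QQ c (Suc 0) = 1" | "QQ c (Suc (Suc k)) = c (Suc k) * QQ c (Suc k) + QQ c k"
fun PP :: "(nat \<Rightarrow> int) \<Rightarrow> nat \<Rightarrow> int" where
 "PP c 0 = 1" | "PP c (Suc 0) = c 0" | "PP c (Suc (Suc k)) = c (Suc k) * PP c (Suc k) + PP c k"

definition EE :: "real \<Rightarrow> (nat \<Rightarrow> int) \<Rightarrow> nat \<Rightarrow> real" where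
  "EE xi c k = real_of_int (QQ c k) * xi - real_of_int (PP c k)"

lemma QQ_basic:
  assumes "\<forall>k\<ge>1. 1 \<le> c k"
  shows "0 \<le> QQ c k \<and> 1 \<le> QQ c (Suc k) \<and> QQ c k \<le> QQ c (Suc k)"
proof (induction k rule: nat_less_induct)
  case (1 k)
  show ?case
  proof (cases k)
    case 0 then show ?thesis by simp
  next
    case (Suc m)
    then have IH: "0 \<le> QQ c m \<and> 1 \<le> QQ c (Suc m) \<and> QQ c m \<le> QQ c (Suc m)" using 1 by simp
    have c: "1 \<le> c (Suc m)" using assms by simp
    have "QQ c (Suc (Suc m)) = c (Suc m) * QQ c (Suc m) + QQ c m" by simp
    moreover have "c (Suc m) * QQ c (Suc m) \<ge> QQ c (Suc m)" using c IH by (simp add: mult_le_cancel_right1)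
    ultimately have "QQ c (Suc (Suc m)) \<ge> QQ c (Suc m)" using IH by linarith
    then show ?thesis using Suc IH by simp
  qed
qed

lemma QQ_grow:
  assumes "\<forall>k\<ge>1. 1 \<le> c k"
  shows "int k \<le> QQ c (Suc k)"
proof (induction k rule: nat_less_induct)
  case (1 k)
  show ?case
  proof (cases k)
    case 0 then show ?thesis by simp
  next
    case (Suc m)
    note b = QQ_basic[OF assms]
    show ?thesis
    proof (cases m)
      case 0
      then show ?thesis using Suc b[of 1] by simp
    next
      case (Suc m')
      have IH: "int m \<le> QQ c (Suc m)" using 1 \<open>k = Suc m\<close> by simp
      have c: "1 \<le> c (Suc m)" using assms by simp
      have "c (Suc m) * QQ c (Suc m) \<ge> QQ c (Suc m)" using c b[of m] by (simp add: mult_le_cancel_right1)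
      moreover have "QQ c m \<ge> 1" using b[of m'] Suc by simp
      ultimately show ?thesis using \<open>k = Suc m\<close> IH by simp
    qed
  qed
qed

lemma QQ_pos: "\<forall>k\<ge>1. 1 \<le> c k \<Longrightarrow> k \<ge> 1 \<Longrightarrow> 1 \<le> QQ c k"
  using QQ_basic[of c "k - 1"] by simp

lemma det_PQ: "PP c (Suc k) * QQ c k - PP c k * QQ c (Suc k) = (-1) ^ Suc k"
proof (induction k)
  case 0 then show ?case by simp
next
  case (Suc k)
  have "PP c (Suc (Suc k)) * QQ c (Suc k) - PP c (Suc k) * QQ c (Suc (Suc k))
        = - (PP c (Suc k) * QQ c k - PP c k * QQ c (Suc k))"
    by (simp add: algebra_simps)
  then show ?case using Suc by simp
qed

lemma EE_0: "EE xi c 0 = -1" by (simp add: EE_def)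

lemma EE_rec: "EE xi c (Suc (Suc k)) = c (Suc k) * EE xi c (Suc k) + EE xi c k"
  by (simp add: EE_def algebra_simps)

lemma EE_step:
  assumes "cfs xi c tau"
  shows "EE xi c (Suc k) = - tau (Suc k) * EE xi c k"
proof (induction k)
  case 0
  then show ?case using cfs_xi[OF assms] by (simp add: EE_def)
next
  case (Suc k)
  have t: "tau (Suc k) = hh (c (Suc k)) (tau (Suc (Suc k)))" "0 < tau (Suc k)"
    "0 < tau (Suc (Suc k))" "1 \<le> c (Suc k)"
    using cfs_rec[OF assms, of "Suc k"] cfs_pos[OF assms, of "Suc k"] cfs_pos[OF assms, of "Suc (Suc k)"]
      cfs_c[OF assms, of "Suc k"] by auto
  define a where "a = real_of_int (c (Suc k))"
  define b where "b = tau (Suc (Suc k))"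
  define E0 where "E0 = EE xi c k"
  define E1 where "E1 = EE xi c (Suc k)"
  have pos: "a + b > 0" using t unfolding a_def b_def by simp
  have inv: "tau (Suc k) * (a + b) = 1"
    using t(1) pos unfolding a_def b_def by (simp add: hh_def)
  have IH: "E1 = - tau (Suc k) * E0" using Suc unfolding E0_def E1_def .
  have "E0 = - (a + b) * E1"
  proof -
    have "E1 * (a + b) = - (tau (Suc k) * (a + b)) * E0" using IH by simp
    also have "\<dots> = - E0" using inv by simp
    finally show ?thesis by (simp add: algebra_simps)
  qed
  moreover have "EE xi c (Suc (Suc k)) = a * E1 + E0"
    unfolding a_def E1_def E0_def by (rule EE_rec)
  ultimately show ?case unfolding E1_def[symmetric] b_def[symmetric] by (simp add: algebra_simps)
qed

lemma EE_nz:
  assumes "cfs xi c tau"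
  shows "EE xi c k \<noteq> 0"
proof (induction k)
  case 0 then show ?case by (simp add: EE_0)
next
  case (Suc k)
  have "tau (Suc k) > 0" using cfs_c1[OF assms] cfs_pos[OF assms] by auto
  then show ?case using Suc EE_step[OF assms, of k] by simp
qed

lemma EE_abs:
  assumes "cfs xi c tau"
  shows "\<bar>EE xi c k\<bar> * (real_of_int (QQ c (Suc k)) + real_of_int (QQ c k) * tau (Suc k)) = 1"
proof -
  have c1: "\<forall>k\<ge>1. 1 \<le> c k" using cfs_c1[OF assms] cfs_pos[OF assms] by auto
  have d: "real_of_int (QQ c (Suc k)) * EE xi c k - QQ c k * EE xi c (Suc k) = (-1) ^ Suc k"
  proof -
    have "real_of_int (QQ c (Suc k)) * EE xi c k - QQ c k * EE xi c (Suc k)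
      = real_of_int (PP c (Suc k) * QQ c k - PP c k * QQ c (Suc k))"
      by (simp add: EE_def algebra_simps)
    then show ?thesis by (simp add: det_PQ)
  qed
  have e: "EE xi c (Suc k) = - tau (Suc k) * EE xi c k" by (rule EE_step[OF assms])
  have "EE xi c k * (real_of_int (QQ c (Suc k)) + real_of_int (QQ c k) * tau (Suc k))
     = real_of_int (QQ c (Suc k)) * EE xi c k - QQ c k * EE xi c (Suc k)"
    unfolding e by (simp add: algebra_simps)
  also have "\<dots> = (-1) ^ Suc k" by (rule d)
  finally have "EE xi c k * (real_of_int (QQ c (Suc k)) + real_of_int (QQ c k) * tau (Suc k)) = (-1) ^ Suc k" .
  then have "\<bar>EE xi c k * (real_of_int (QQ c (Suc k)) + real_of_int (QQ c k) * tau (Suc k))\<bar> = 1" by simp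
  moreover have "real_of_int (QQ c (Suc k)) + real_of_int (QQ c k) * tau (Suc k) > 0"
  proof -
    have "QQ c (Suc k) \<ge> 1" "QQ c k \<ge> 0" using QQ_basic[OF c1, of k] by auto
    moreover have "tau (Suc k) > 0" using cfs_c1[OF assms] cfs_pos[OF assms] by auto
    ultimately have "real_of_int (QQ c k) * tau (Suc k) \<ge> 0" by simp
    then show ?thesis using \<open>QQ c (Suc k) \<ge> 1\<close> by linarith
  qed
  ultimately show ?thesis by (simp add: abs_mult)
qed

lemma EE_le:
  assumes "cfs xi c tau"
  shows "\<bar>EE xi c k\<bar> * QQ c (Suc k) \<le> 1"
proof -
  have c1: "\<forall>k\<ge>1. 1 \<le> c k" using cfs_c1[OF assms] cfs_pos[OF assms] by auto
  have "QQ c k \<ge> 0" using QQ_basic[OF c1, of k] by auto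
  moreover have "tau (Suc k) > 0" using cfs_c1[OF assms] cfs_pos[OF assms] by auto
  ultimately have "\<bar>EE xi c k\<bar> * (real_of_int (QQ c k) * tau (Suc k)) \<ge> 0" by simp
  then show ?thesis using EE_abs[OF assms, of k] by (simp add: algebra_simps)
qed

lemma cfs_irrational:
  assumes "cfs xi c tau"
  shows "xi \<notin> \<rat>"
proof
  assume "xi \<in> \<rat>"
  then obtain a b where ab: "xi = of_int a / of_int b" "b > 0" by (metis Rats_cases')
  have c1: "\<forall>k\<ge>1. 1 \<le> c k" using cfs_c1[OF assms] cfs_pos[OF assms] by auto
  define k where "k = nat b + 1"
  have bE: "b * EE xi c k = real_of_int (QQ c k * a - PP c k * b)"
    using ab by (simp add: EE_def field_simps)
  moreover have "real_of_int b * EE xi c k \<noteq> 0" using EE_nz[OF assms, of k] \<open>b > 0\<close> by simp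
  ultimately have "QQ c k * a - PP c k * b \<noteq> 0" by (metis of_int_eq_0_iff)
  then have "\<bar>QQ c k * a - PP c k * b\<bar> \<ge> 1" by linarith
  then have "\<bar>real_of_int (QQ c k * a - PP c k * b)\<bar> \<ge> 1"
    by (metis of_int_1_le_iff of_int_abs)
  then have "\<bar>b * EE xi c k\<bar> \<ge> 1" using bE by simp
  moreover have "\<bar>EE xi c k\<bar> * QQ c (Suc k) \<le> 1" by (rule EE_le[OF assms])
  moreover have "QQ c (Suc k) \<ge> b + 1" using QQ_grow[OF c1, of k] \<open>b>0\<close> unfolding k_def by simp
  ultimately show False using \<open>b > 0\<close>
  proof -
    assume h: "\<bar>b * EE xi c k\<bar> \<ge> 1" "\<bar>EE xi c k\<bar> * QQ c (Suc k) \<le> 1" "QQ c (Suc k) \<ge> b + 1"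
    have "\<bar>EE xi c k\<bar> * (b+1) \<le> \<bar>EE xi c k\<bar> * QQ c (Suc k)"
      using h(3) by (intro mult_left_mono) auto
    then have "\<bar>EE xi c k\<bar> * (b+1) \<le> 1" using h(2) by linarith
    moreover have "\<bar>b * EE xi c k\<bar> = b * \<bar>EE xi c k\<bar>" using \<open>b>0\<close> by (simp add: abs_mult)
    ultimately show False using h(1) EE_nz[OF assms, of k] by (simp add: algebra_simps)
  qed
qed


primrec cfx :: "real \<Rightarrow> nat \<Rightarrow> real" where
  "cfx x 0 = x" | "cfx x (Suc k) = 1 / frac (cfx x k)"

lemma cfx_irr: "x \<notin> \<rat> \<Longrightarrow> cfx x k \<notin> \<rat>"
proof (induction k)
  case 0 then show ?case by simp
next
  case (Suc k)
  have "frac (cfx x k) \<notin> \<rat>"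
  proof
    assume "frac (cfx x k) \<in> \<rat>"
    then have "frac (cfx x k) + of_int \<lfloor>cfx x k\<rfloor> \<in> \<rat>" by (simp add: Rats_add)
    then show False using Suc by (simp add: frac_def)
  qed
  show ?case
  proof
    assume "cfx x (Suc k) \<in> \<rat>"
    then have "1 / cfx x (Suc k) \<in> \<rat>" by (intro Rats_divide) auto
    moreover have "1 / cfx x (Suc k) = frac (cfx x k)" by simp
    ultimately show False using \<open>frac (cfx x k) \<notin> \<rat>\<close> by simp
  qed
qed

lemma frac_irr_pos:
  assumes "y \<notin> \<rat>" shows "0 < frac y"
proof -
  have "y \<notin> \<int>" using assms Ints_subset_Rats by blast
  then have "frac y \<noteq> 0" by (simp add: frac_eq_0_iff)
  then show ?thesis using frac_ge_0[of y] by linarith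
qed

lemma cfx_gt1: "x \<notin> \<rat> \<Longrightarrow> 1 < cfx x (Suc k)"
proof -
  assume "x \<notin> \<rat>"
  then have f: "0 < frac (cfx x k)" "frac (cfx x k) < 1" using cfx_irr frac_irr_pos frac_lt_1 by auto
  have "cfx x (Suc k) = 1 / frac (cfx x k)" by simp
  also have "1 < \<dots>" using f by (simp add: less_divide_eq_1_pos)
  finally show ?thesis .
qed

lemma exists_cfs:
  assumes "xi \<notin> \<rat>"
  shows "\<exists>c tau. cfs xi c tau"
proof -
  define c where "c = (\<lambda>k. \<lfloor>cfx xi k\<rfloor>)"
  define tau where "tau = (\<lambda>k. 1 / cfx xi k)"
  have "cfs xi c tau" unfolding cfs_def
  proof (intro conjI allI impI)
    fix k :: nat assume "1 \<le> k"
    then obtain m where m: "k = Suc m" by (cases k) auto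
    have g: "1 < cfx xi k" using cfx_gt1[OF assms] m by simp
    show "1 \<le> c k" unfolding c_def using g by linarith
    show "0 < tau k" unfolding tau_def using g by simp
    show "tau k < 1" unfolding tau_def using g by simp
    have fp: "0 < frac (cfx xi k)" using frac_irr_pos cfx_irr[OF assms] by blast
    have "hh (c k) (tau (Suc k)) = 1 / (of_int \<lfloor>cfx xi k\<rfloor> + frac (cfx xi k))"
      unfolding hh_def c_def tau_def using fp by simp
    also have "\<dots> = tau k" unfolding tau_def by (simp add: frac_def)
    finally show "tau k = hh (c k) (tau (Suc k))" by simp
  next
    have fp: "0 < frac xi" using frac_irr_pos assms by blast
    show "xi = real_of_int (c 0) + tau 1" unfolding c_def tau_def using fp by (simp add: frac_def)
  qed
  then show ?thesis by blast
qed


definition wt :: "real \<Rightarrow> real \<Rightarrow> real" where "wt d x = min 1 (max 0 (2 * x / d - 1))"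

definition tm :: "real \<Rightarrow> real \<Rightarrow> int \<Rightarrow> int \<Rightarrow> int \<Rightarrow> real \<Rightarrow> real \<Rightarrow> real" where
 "tm L d u v G r h = wt d (u + v * r) *
     (G * (1 + r * h) / max ((u + v * r) * \<bar>v - u * h\<bar>) (G * (1 + r * h) / L))"

definition box :: "int \<Rightarrow> (int \<times> int) set" where "box N = {-N..N} \<times> {-N..N}"

definition Phi :: "nat \<Rightarrow> real \<Rightarrow> real \<Rightarrow> int \<Rightarrow> int \<Rightarrow> int \<Rightarrow> real \<Rightarrow> real \<Rightarrow> real" where
 "Phi n L d N A1 A0 r h = Max ((\<lambda>(u,v). tm L d u v (gcd (u * A1 + v * A0) (int n)) r h) ` box N)"

definition LamB :: "nat \<Rightarrow> real" where "LamB B = real B + 1"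
definition delB :: "nat \<Rightarrow> real" where "delB B = 1 / (real B + 1)"
definition NB :: "nat \<Rightarrow> nat \<Rightarrow> int" where "NB n B = int ((4 * n * (B + 1) + 1) * (B + 2) + 1)"

definition rho :: "(nat \<Rightarrow> int) \<Rightarrow> nat \<Rightarrow> real" where
  "rho c i = real_of_int (QQ c i) / real_of_int (QQ c (Suc i))"

definition PhiB :: "nat \<Rightarrow> nat \<Rightarrow> (nat \<Rightarrow> int) \<Rightarrow> (nat \<Rightarrow> real) \<Rightarrow> nat \<Rightarrow> real" where
  "PhiB n B c tau i = Phi n (LamB B) (delB B) (NB n B) (QQ c (Suc i)) (QQ c i) (rho c i) (tau (Suc i))"

lemma finite_box: "finite (box N)" unfolding box_def by simp
lemma box_ne: "N \<ge> 0 \<Longrightarrow> box N \<noteq> {}" unfolding box_def by auto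

lemma Phi_ge:
  assumes "(u,v) \<in> box N"
  shows "tm L d u v (gcd (u * A1 + v * A0) (int n)) r h \<le> Phi n L d N A1 A0 r h"
  unfolding Phi_def
  by (rule Max_ge) (use assms finite_box in auto)

lemma Phi_attained:
  assumes "N \<ge> 0"
  shows "\<exists>(u,v)\<in>box N. Phi n L d N A1 A0 r h = tm L d u v (gcd (u * A1 + v * A0) (int n)) r h"
proof -
  let ?f = "(\<lambda>(u,v). tm L d u v (gcd (u * A1 + v * A0) (int n)) r h)"
  have "Max (?f ` box N) \<in> ?f ` box N"
    by (rule Max_in) (use finite_box box_ne[OF assms] in auto)
  then show ?thesis unfolding Phi_def by auto
qed

lemma aq_eq:
  assumes "t > 0"
  shows "approx_quot n xi s t = gcd t (int n) / (t * \<bar>t * xi - s\<bar>)"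
proof -
  have "(real_of_int t)^2 * \<bar>real_of_int s / real_of_int t - xi\<bar> = t * \<bar>t * xi - s\<bar>"
  proof -
    have "real_of_int s / real_of_int t - xi = (s - t * xi) / t" using assms by (simp add: field_simps)
    then have "\<bar>real_of_int s / real_of_int t - xi\<bar> = \<bar>t * xi - s\<bar> / t" using assms by simp
    then show ?thesis using assms by (simp add: power2_eq_square)
  qed
  then show ?thesis unfolding approx_quot_def by simp
qed

lemma val_lin:
  assumes "cfs xi c tau"
  shows "real_of_int (u * QQ c (Suc k) + v * QQ c k) * xi - real_of_int (u * PP c (Suc k) + v * PP c k)
       = EE xi c k * (v - u * tau (Suc k))"
proof -
  have e: "EE xi c (Suc k) = - tau (Suc k) * EE xi c k" by (rule EE_step[OF assms])
  have "real_of_int (u * QQ c (Suc k) + v * QQ c k) * xi - real_of_int (u * PP c (Suc k) + v * PP c k)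
      = u * EE xi c (Suc k) + v * EE xi c k" by (simp add: EE_def algebra_simps)
  also have "\<dots> = EE xi c k * (v - u * tau (Suc k))" unfolding e by (simp add: algebra_simps)
  finally show ?thesis .
qed

lemma QQ_Suc_pos: "cfs xi c tau \<Longrightarrow> 0 < QQ c (Suc k)"
proof -
  assume a: "cfs xi c tau"
  show ?thesis using QQ_basic[OF cfs_c1[OF a], of k] by simp
qed

lemma t_eq:
  assumes "cfs xi c tau"
  shows "real_of_int (u * QQ c (Suc k) + v * QQ c k) = QQ c (Suc k) * (u + v * rho c k)"
  using QQ_Suc_pos[OF assms, of k] unfolding rho_def by (simp add: field_simps)

lemma EE_rho:
  assumes "cfs xi c tau"
  shows "\<bar>EE xi c k\<bar> * QQ c (Suc k) * (1 + rho c k * tau (Suc k)) = 1"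
proof -
  have q: "real_of_int (QQ c (Suc k)) > 0" using QQ_Suc_pos[OF assms, of k] by simp
  have "\<bar>EE xi c k\<bar> * QQ c (Suc k) * (1 + rho c k * tau (Suc k))
     = \<bar>EE xi c k\<bar> * (real_of_int (QQ c (Suc k)) + real_of_int (QQ c k) * tau (Suc k))"
    unfolding rho_def using q by (simp add: field_simps)
  then show ?thesis using EE_abs[OF assms, of k] by simp
qed

lemma val_formula:
  assumes "cfs xi c tau"
    and s: "s = u * PP c (Suc k) + v * PP c k" and t: "t = u * QQ c (Suc k) + v * QQ c k"
    and tpos: "t > 0"
  shows "real_of_int t * \<bar>t * xi - s\<bar> = (u + v * rho c k) * \<bar>v - u * tau (Suc k)\<bar> / (1 + rho c k * tau (Suc k))"
proof -
  define r where "r = rho c k"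
  define h where "h = tau (Suc k)"
  define E where "E = \<bar>EE xi c k\<bar>"
  define Q where "Q = real_of_int (QQ c (Suc k))"
  have r0: "r \<ge> 0" unfolding r_def rho_def using QQ_basic[OF cfs_c1[OF assms(1)], of k] by simp
  have h0: "h > 0" unfolding h_def using cfs_pos[OF assms(1), of "Suc k"] by simp
  have pos: "1 + r * h > 0" using r0 h0 by (simp add: add_pos_nonneg)
  have key: "E * Q * (1 + r * h) = 1" unfolding E_def Q_def r_def h_def by (rule EE_rho[OF assms(1)])
  have tt: "real_of_int t = Q * (u + v * r)" unfolding t Q_def r_def by (rule t_eq[OF assms(1)])
  have "\<bar>t * xi - s\<bar> = E * \<bar>v - u * h\<bar>"
    unfolding E_def h_def s t using val_lin[OF assms(1), of u k v] by (simp add: abs_mult)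
  then have "real_of_int t * \<bar>t * xi - s\<bar> = (u + v * r) * \<bar>v - u * h\<bar> * (E * Q)"
    using tt by (simp add: algebra_simps)
  also have "E * Q = 1 / (1 + r * h)" using key pos by (simp add: field_simps)
  finally show ?thesis unfolding r_def h_def by simp
qed


lemma wt_pos_imp: "0 < wt d x \<Longrightarrow> d > 0 \<Longrightarrow> x > d / 2"
proof -
  assume a: "0 < wt d x" "d > 0"
  then have "0 < max 0 (2 * x / d - 1)" unfolding wt_def by simp
  then have "2 * x / d - 1 > 0" by (simp add: less_max_iff_disj)
  then have "1 < 2 * x / d" by simp
  then have "d < 2 * x" using a(2) by (simp add: less_divide_eq_1_pos)
  then show ?thesis by simp
qed

lemma wt_le1: "wt d x \<le> 1" unfolding wt_def by simp
lemma wt_ge0: "0 \<le> wt d x" unfolding wt_def by simp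

lemma wt_one: "d > 0 \<Longrightarrow> x \<ge> d \<Longrightarrow> wt d x = 1"
proof -
  assume a: "d > 0" "x \<ge> d"
  then have "2 * x / d \<ge> 2" by (simp add: le_divide_eq)
  then show ?thesis unfolding wt_def by simp
qed

lemma min_div_max:
  assumes "(A::real) > 0" "X > 0" "L > 0"
  shows "A / max X (A / L) = min L (A / X)"
proof (cases "X \<ge> A / L")
  case True
  then have "A \<le> X * L" using assms by (simp add: pos_divide_le_eq)
  then have "A / X \<le> L" using assms by (simp add: pos_divide_le_eq mult.commute)
  then show ?thesis using True by (simp add: max_def min_def)
next
  case False
  then have "X < A / L" by simp
  then have "X * L < A" using assms by (simp add: pos_less_divide_eq)
  then have "A / X > L" using assms by (simp add: pos_less_divide_eq mult.commute)
  moreover have "A / (A / L) = L" using assms by simp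
  ultimately show ?thesis using False by (simp add: max_def min_def)
qed

lemma tm_le_aq:
  assumes cf: "cfs xi c tau" and d: "d > 0" and L: "L > 0"
    and w: "wt d (u + v * rho c k) > 0"
    and s: "s = u * PP c (Suc k) + v * PP c k" and t: "t = u * QQ c (Suc k) + v * QQ c k"
  shows "t > 0 \<and> real_of_int t \<ge> d / 2 * QQ c (Suc k) \<and>
         tm L d u v (gcd t (int n)) (rho c k) (tau (Suc k)) \<le> approx_quot n xi s t"
proof -
  define x where "x = u + v * rho c k"
  define h where "h = tau (Suc k)"
  define r where "r = rho c k"
  have Q: "real_of_int (QQ c (Suc k)) > 0" using QQ_Suc_pos[OF cf, of k] by simp
  have xd: "x > d / 2" using wt_pos_imp[OF w d] unfolding x_def .
  have tt: "real_of_int t = QQ c (Suc k) * x" unfolding t x_def by (rule t_eq[OF cf])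
  have tpos: "t > 0"
  proof -
    have "real_of_int t > 0" using tt Q xd d by simp
    then show ?thesis by simp
  qed
  have tge: "real_of_int t \<ge> d / 2 * QQ c (Suc k)" using tt Q xd by (simp add: mult_right_mono)
  have r0: "r \<ge> 0" unfolding r_def rho_def using QQ_basic[OF cfs_c1[OF cf], of k] by simp
  have h0: "h > 0" unfolding h_def using cfs_pos[OF cf, of "Suc k"] by simp
  have A0: "1 + r * h > 0" using r0 h0 by (simp add: add_pos_nonneg)
  have vf: "real_of_int t * \<bar>t * xi - s\<bar> = x * \<bar>v - u * h\<bar> / (1 + r * h)"
    using val_formula[OF cf s t tpos] unfolding x_def h_def r_def .
  have nz: "real_of_int t * \<bar>t * xi - s\<bar> \<noteq> 0"
  proof
    assume "real_of_int t * \<bar>t * xi - s\<bar> = 0"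
    then have "xi = s / t" using tpos by (simp add: field_simps)
    then have "xi \<in> \<rat>" by simp
    then show False using cfs_irrational[OF cf] by simp
  qed
  define X where "X = x * \<bar>v - u * h\<bar>"
  have Xpos: "X > 0"
  proof -
    have "X \<noteq> 0" using nz vf unfolding X_def by auto
    moreover have "X \<ge> 0" unfolding X_def using xd d by simp
    ultimately show ?thesis by simp
  qed
  define G where "G = real_of_int (gcd t (int n))"
  have G0: "G \<ge> 0" unfolding G_def by simp
  have aq: "approx_quot n xi s t = G * (1 + r * h) / X"
    unfolding aq_eq[OF tpos] G_def vf X_def[symmetric] using A0 by simp
  have "tm L d u v (gcd t (int n)) (rho c k) (tau (Suc k))
      = wt d x * (G * (1 + r * h) / max X (G * (1 + r * h) / L))"
    unfolding tm_def x_def X_def G_def r_def h_def by simp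
  also have "\<dots> \<le> 1 * (G * (1 + r * h) / X)"
  proof (rule mult_mono)
    show "wt d x \<le> 1" by (rule wt_le1)
    show "G * (1 + r * h) / max X (G * (1 + r * h) / L) \<le> G * (1 + r * h) / X"
      by (rule divide_left_mono) (use G0 A0 Xpos in auto)
    show "(0::real) \<le> 1" by simp
    show "0 \<le> G * (1 + r * h) / max X (G * (1 + r * h) / L)" using G0 A0 Xpos by simp
  qed
  finally show ?thesis using aq tpos tge by simp
qed

lemma rho_bounds:
  assumes cf: "cfs xi c tau"
  shows "0 \<le> rho c k \<and> rho c k \<le> 1"
proof -
  have "0 \<le> QQ c k" "QQ c k \<le> QQ c (Suc k)" "0 < QQ c (Suc k)"
    using QQ_basic[OF cfs_c1[OF cf], of k] by auto
  then show ?thesis unfolding rho_def by (simp add: divide_le_eq_1)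
qed

lemma rho_ge:
  assumes cf: "cfs xi c tau" and k: "k \<ge> 1" and B: "c k \<le> int B"
  shows "rho c k \<ge> 1 / (real B + 1)"
proof -
  obtain m where m: "k = Suc m" using k by (cases k) auto
  have b: "0 \<le> QQ c m" "QQ c m \<le> QQ c (Suc m)" "1 \<le> QQ c (Suc m)"
    using QQ_basic[OF cfs_c1[OF cf], of m] by auto
  have "QQ c (Suc (Suc m)) = c (Suc m) * QQ c (Suc m) + QQ c m" by simp
  also have "\<dots> \<le> int B * QQ c (Suc m) + QQ c (Suc m)"
  proof -
    have "c (Suc m) * QQ c (Suc m) \<le> int B * QQ c (Suc m)"
      using B m b by (intro mult_right_mono) auto
    then show ?thesis using b by linarith
  qed
  finally have "QQ c (Suc k) \<le> (int B + 1) * QQ c k" using m by (simp add: algebra_simps)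
  then have le: "real_of_int (QQ c (Suc k)) \<le> (real B + 1) * QQ c k"
  proof -
    have "real_of_int (QQ c (Suc k)) \<le> real_of_int ((int B + 1) * QQ c k)"
      using \<open>QQ c (Suc k) \<le> (int B + 1) * QQ c k\<close> by (simp only: of_int_le_iff)
    then show ?thesis by simp
  qed
  have pos: "real_of_int (QQ c (Suc k)) > 0" using QQ_Suc_pos[OF cf, of k] by simp
  show ?thesis unfolding rho_def using le pos
    by (simp add: divide_le_eq le_divide_eq field_simps)
qed

lemma tau_ge:
  assumes cf: "cfs xi c tau" and k: "k \<ge> 1" and B: "c k \<le> int B"
  shows "tau k \<ge> 1 / (real B + 1)"
proof -
  have r: "tau k = 1 / (c k + tau (Suc k))" using cfs_rec[OF cf k] unfolding hh_def .
  have "tau (Suc k) < 1" "tau (Suc k) > 0" using cfs_lt1[OF cf] cfs_pos[OF cf] by auto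
  moreover have "real_of_int (c k) \<le> real B" using B by simp
  moreover have "real_of_int (c k) \<ge> 1" using cfs_c[OF cf k] by simp
  ultimately have "c k + tau (Suc k) \<le> real B + 1" "c k + tau (Suc k) > 0" by linarith+
  then have "1 / (real B + 1) \<le> 1 / (c k + tau (Suc k))"
    by (intro divide_left_mono) auto
  then show ?thesis using r by simp
qed

lemma tau_le:
  assumes cf: "cfs xi c tau" and k: "k \<ge> 1" and B: "c (Suc k) \<le> int B"
  shows "tau k \<le> (real B + 1) / (real B + 2)"
proof -
  have r: "tau k = 1 / (c k + tau (Suc k))" using cfs_rec[OF cf k] unfolding hh_def .
  have g: "tau (Suc k) \<ge> 1 / (real B + 1)" using tau_ge[OF cf _ B] by simp
  have "real_of_int (c k) \<ge> 1" using cfs_c[OF cf k] by simp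
  then have "c k + tau (Suc k) \<ge> 1 + 1 / (real B + 1)" using g by linarith
  also have "1 + 1 / (real B + 1) = (real B + 2) / (real B + 1)" by (simp add: field_simps)
  finally have ge: "c k + tau (Suc k) \<ge> (real B + 2) / (real B + 1)" .
  have p: "(real B + 2) / (real B + 1) > 0" by simp
  have p2: "c k + tau (Suc k) > 0" using ge p by linarith
  have "1 / (c k + tau (Suc k)) \<le> 1 / ((real B + 2) / (real B + 1))"
    by (rule divide_left_mono[OF ge]) (use p p2 in auto)
  then show ?thesis using r by simp
qed


lemma neg1_sq: "((-1::int) ^ m) * (-1) ^ m = 1"
  by (induct m) auto

lemma LB:
  assumes cf: "cfs xi c tau" and n: "n > 0" and k: "k \<ge> 1"
    and ck: "c k \<le> int B" and ck2: "c (Suc (Suc k)) \<le> int B"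
    and t1: "QQ c k \<le> t" and t2: "t < QQ c (Suc k)"
    and aqh: "approx_quot n xi s t \<ge> 1/2"
  shows "PhiB n B c tau k \<ge> min (LamB B) (approx_quot n xi s t)"
proof -
  define P1 where "P1 = PP c (Suc k)"
  define P0 where "P0 = PP c k"
  define Q1 where "Q1 = QQ c (Suc k)"
  define Q0 where "Q0 = QQ c k"
  define dd where "dd = P1 * Q0 - P0 * Q1"
  have dd2: "dd * dd = 1" unfolding dd_def P1_def P0_def Q1_def Q0_def det_PQ by (rule neg1_sq)
  define u where "u = dd * (s * Q0 - t * P0)"
  define v where "v = dd * (t * P1 - s * Q1)"
  have hs0: "u * P1 + v * P0 = dd * dd * s" unfolding u_def v_def dd_def by (simp add: algebra_simps)
  have ht0: "u * Q1 + v * Q0 = dd * dd * t" unfolding u_def v_def dd_def by (simp add: algebra_simps)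
  have hs: "s = u * PP c (Suc k) + v * PP c k" using hs0 dd2 unfolding P1_def P0_def by simp
  have ht: "t = u * QQ c (Suc k) + v * QQ c k" using ht0 dd2 unfolding Q1_def Q0_def by simp
  have Q0pos: "QQ c k \<ge> 1" using QQ_pos[OF cfs_c1[OF cf] k] .
  have tpos: "t > 0" using t1 Q0pos by simp
  define r where "r = rho c k"
  define h where "h = tau (Suc k)"
  define x where "x = u + v * r"
  have Q1pos: "real_of_int (QQ c (Suc k)) > 0" using QQ_Suc_pos[OF cf, of k] by simp
  have tt: "real_of_int t = QQ c (Suc k) * x" unfolding x_def r_def ht by (rule t_eq[OF cf])
  have xr: "x \<ge> r"
  proof -
    have "real_of_int (QQ c k) \<le> QQ c (Suc k) * x" using t1 tt by (metis of_int_le_iff)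
    then show ?thesis unfolding r_def rho_def using Q1pos by (simp add: divide_le_eq mult.commute)
  qed
  have x1: "x < 1"
  proof -
    have "QQ c (Suc k) * x < QQ c (Suc k)" using t2 tt by (metis of_int_less_iff)
    then show ?thesis using Q1pos by simp
  qed
  have rge: "r \<ge> 1 / (real B + 1)" unfolding r_def by (rule rho_ge[OF cf k ck])
  have rb: "0 \<le> r" "r \<le> 1" unfolding r_def using rho_bounds[OF cf] by auto
  have hle: "h \<le> (real B + 1) / (real B + 2)" unfolding h_def by (rule tau_le[OF cf _ ck2]) simp
  have h0: "h > 0" "h < 1" unfolding h_def using cfs_pos[OF cf] cfs_lt1[OF cf] by auto
  have A0: "1 + r * h > 0" using rb h0 by (simp add: add_pos_nonneg)
  have vf: "real_of_int t * \<bar>t * xi - s\<bar> = x * \<bar>v - u * h\<bar> / (1 + r * h)"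
    using val_formula[OF cf hs ht tpos] unfolding x_def h_def r_def .
  define X where "X = x * \<bar>v - u * h\<bar>"
  define G where "G = real_of_int (gcd t (int n))"
  have aq: "approx_quot n xi s t = G * (1 + r * h) / X"
    unfolding aq_eq[OF tpos] G_def vf X_def[symmetric] using A0 by simp
  have X0: "X \<ge> 0" unfolding X_def using xr rb by simp
  have Xpos: "X > 0"
  proof (rule ccontr)
    assume "\<not> X > 0"
    then have "X = 0" using X0 by simp
    then have "approx_quot n xi s t = 0" using aq by simp
    then show False using aqh by simp
  qed
  have Gle: "G \<le> real n"
  proof -
    have "gcd t (int n) \<le> int n" using n by (simp add: gcd_le2_int)
    then show ?thesis unfolding G_def by simp
  qed
  have G1: "G \<ge> 1"
  proof -
    have "gcd t (int n) > 0" using n by simp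
    then show ?thesis unfolding G_def by linarith
  qed
  define A where "A = G * (1 + r * h)"
  have Apos: "A > 0" unfolding A_def using G1 A0 by simp
  have Ale: "A \<le> 2 * real n"
  proof -
    have "r * h \<le> 1 * 1" using rb h0 by (intro mult_mono) auto
    then have "1 + r * h \<le> 2" by simp
    then have "G * (1 + r * h) \<le> real n * 2" using Gle G1 A0 by (intro mult_mono) auto
    then show ?thesis unfolding A_def by simp
  qed
  have XA: "X \<le> 2 * A"
  proof -
    have "1/2 \<le> A / X" using aqh aq unfolding A_def by simp
    then have "1/2 * X \<le> A" using Xpos by (simp add: pos_le_divide_eq)
    then show ?thesis by simp
  qed
  define K where "K = 4 * real n * (real B + 1)"
  have vuh: "\<bar>v - u * h\<bar> \<le> K"
  proof -
    have "\<bar>v - u * h\<bar> * (1 / (real B + 1)) \<le> \<bar>v - u * h\<bar> * x"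
      using rge xr by (intro mult_left_mono) auto
    also have "\<dots> = X" unfolding X_def by simp
    also have "\<dots> \<le> 4 * real n" using XA Ale by simp
    finally have "\<bar>v - u * h\<bar> / (real B + 1) \<le> 4 * real n" by simp
    then show ?thesis unfolding K_def by (simp add: divide_le_eq mult.commute)
  qed
  have ub: "\<bar>real_of_int u\<bar> \<le> 1 + \<bar>real_of_int v\<bar>"
  proof -
    have "real_of_int u = x - v * r" unfolding x_def by simp
    moreover have "\<bar>v * r\<bar> \<le> \<bar>real_of_int v\<bar>" using rb by (simp add: abs_mult mult_left_le)
    moreover have "\<bar>x\<bar> \<le> 1" using x1 xr rb by simp
    ultimately show ?thesis by linarith
  qed
  have vb: "\<bar>real_of_int v\<bar> \<le> (K + 1) * (real B + 2)"
  proof -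
    have "\<bar>real_of_int v\<bar> \<le> \<bar>v - u * h\<bar> + \<bar>u * h\<bar>" by linarith
    also have "\<bar>u * h\<bar> \<le> (1 + \<bar>real_of_int v\<bar>) * h" using ub h0 by (simp add: abs_mult mult_right_mono)
    finally have "\<bar>real_of_int v\<bar> \<le> K + (1 + \<bar>real_of_int v\<bar>) * h" using vuh by linarith
    then have "\<bar>real_of_int v\<bar> * (1 - h) \<le> K + h" by (simp add: algebra_simps)
    moreover have "\<bar>real_of_int v\<bar> * (1 / (real B + 2)) \<le> \<bar>real_of_int v\<bar> * (1 - h)"
    proof (rule mult_left_mono)
      have "1 - h \<ge> 1 - (real B + 1) / (real B + 2)" using hle by simp
      also have "1 - (real B + 1) / (real B + 2) = 1 / (real B + 2)" by (simp add: field_simps)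
      finally show "1 / (real B + 2) \<le> 1 - h" .
    qed simp
    ultimately have "\<bar>real_of_int v\<bar> / (real B + 2) \<le> K + 1" using h0 by simp
    then show ?thesis by (simp add: divide_le_eq mult.commute)
  qed
  have Nreal: "real_of_int (NB n B) = (K + 1) * (real B + 2) + 1" unfolding NB_def K_def by (simp add: algebra_simps)
  have inbox: "(u, v) \<in> box (NB n B)"
  proof -
    have "\<bar>real_of_int v\<bar> \<le> real_of_int (NB n B)" using vb Nreal by simp
    moreover have "\<bar>real_of_int u\<bar> \<le> real_of_int (NB n B)" using vb ub Nreal by simp
    ultimately have "\<bar>v\<bar> \<le> NB n B" "\<bar>u\<bar> \<le> NB n B" by linarith+
    then show ?thesis unfolding box_def by auto
  qed
  have w1: "wt (delB B) x = 1" using rge xr unfolding delB_def by (intro wt_one) auto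
  have "tm (LamB B) (delB B) u v (gcd (u * QQ c (Suc k) + v * QQ c k) (int n)) (rho c k) (tau (Suc k))
        = A / max X (A / LamB B)"
    unfolding tm_def A_def X_def G_def using w1 ht unfolding x_def r_def h_def by simp
  also have "\<dots> = min (LamB B) (A / X)" by (rule min_div_max[OF Apos Xpos]) (simp add: LamB_def)
  also have "A / X = approx_quot n xi s t" using aq unfolding A_def by simp
  finally have "tm (LamB B) (delB B) u v (gcd (u * QQ c (Suc k) + v * QQ c k) (int n)) (rho c k) (tau (Suc k))
        = min (LamB B) (approx_quot n xi s t)" .
  moreover have "tm (LamB B) (delB B) u v (gcd (u * QQ c (Suc k) + v * QQ c k) (int n)) (rho c k) (tau (Suc k))
      \<le> PhiB n B c tau k" unfolding PhiB_def by (rule Phi_ge[OF inbox])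
  ultimately show ?thesis by simp
qed


definition Sd :: "real \<Rightarrow> real \<Rightarrow> (int \<times> int) set" where
  "Sd xi d = {(s::int, t::int). t > 0 \<and> 0 < \<bar>real_of_int s / real_of_int t - xi\<bar>
                                  \<and> \<bar>real_of_int s / real_of_int t - xi\<bar> < d}"

lemma lambda_Sd: "lambda_n n xi = (INF d\<in>{d::real. d > 0}. SUP st\<in>Sd xi d. ereal (approx_quot n xi (fst st) (snd st)))"
  unfolding lambda_n_def Sd_def by simp

lemma L1:
  assumes "d > 0" "\<And>s t. (s,t) \<in> Sd xi d \<Longrightarrow> approx_quot n xi s t \<le> M"
  shows "lambda_n n xi \<le> ereal M"
  unfolding lambda_Sd
proof (rule INF_lower2)
  show "d \<in> {d. d > 0}" using assms by simp
  show "(SUP st\<in>Sd xi d. ereal (approx_quot n xi (fst st) (snd st))) \<le> ereal M"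
    by (rule SUP_least) (use assms(2) in auto)
qed

lemma L2:
  assumes "\<And>d. d > 0 \<Longrightarrow> \<exists>s t. (s,t) \<in> Sd xi d \<and> approx_quot n xi s t \<ge> M"
  shows "lambda_n n xi \<ge> ereal M"
  unfolding lambda_Sd
proof (rule INF_greatest)
  fix d assume "d \<in> {d::real. d > 0}"
  then have "d > 0" by simp
  then obtain s t where st: "(s,t) \<in> Sd xi d" "approx_quot n xi s t \<ge> M" using assms by blast
  show "ereal M \<le> (SUP st\<in>Sd xi d. ereal (approx_quot n xi (fst st) (snd st)))"
    by (rule SUP_upper2[OF st(1)]) (use st(2) in simp)
qed

lemma L3:
  assumes "lambda_n n xi = ereal mu" "e > 0"
  shows "\<exists>d>0. \<forall>s t. (s,t) \<in> Sd xi d \<longrightarrow> approx_quot n xi s t < mu + e"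
proof -
  have "(INF d\<in>{d::real. d > 0}. SUP st\<in>Sd xi d. ereal (approx_quot n xi (fst st) (snd st))) < ereal (mu + e)"
    using assms lambda_Sd[of n xi] by simp
  then obtain d where d: "d > 0" "(SUP st\<in>Sd xi d. ereal (approx_quot n xi (fst st) (snd st))) < ereal (mu + e)"
    by (auto simp: INF_less_iff)
  have "\<forall>s t. (s,t) \<in> Sd xi d \<longrightarrow> approx_quot n xi s t < mu + e"
  proof (intro allI impI)
    fix s t assume st: "(s,t) \<in> Sd xi d"
    have "ereal (approx_quot n xi s t) \<le> (SUP st\<in>Sd xi d. ereal (approx_quot n xi (fst st) (snd st)))"
      by (rule SUP_upper2[OF st]) simp
    then have "ereal (approx_quot n xi s t) < ereal (mu + e)" using d(2) by (rule order.strict_trans1)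
    then show "approx_quot n xi s t < mu + e" by simp
  qed
  then show ?thesis using d(1) by blast
qed

lemma L4:
  assumes "lambda_n n xi = ereal mu" "e > 0" "d > 0"
  shows "\<exists>s t. (s,t) \<in> Sd xi d \<and> approx_quot n xi s t > mu - e"
proof -
  have "lambda_n n xi \<le> (SUP st\<in>Sd xi d. ereal (approx_quot n xi (fst st) (snd st)))"
    unfolding lambda_Sd by (rule INF_lower) (use assms in simp)
  moreover have "ereal (mu - e) < ereal mu" using assms by simp
  ultimately have "ereal (mu - e) < (SUP st\<in>Sd xi d. ereal (approx_quot n xi (fst st) (snd st)))"
    using assms(1) by (metis order.strict_trans2)
  then obtain st where "st \<in> Sd xi d" "ereal (mu - e) < ereal (approx_quot n xi (fst st) (snd st))"
    by (auto simp: less_SUP_iff)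
  then show ?thesis by (cases st) auto
qed

lemma AB:
  assumes "t > 0" "approx_quot n xi s t \<ge> a" "a > 0" "n > 0"
  shows "\<bar>real_of_int s / real_of_int t - xi\<bar> \<le> real n / (a * (real_of_int t)^2)"
proof -
  define e where "e = \<bar>real_of_int s / real_of_int t - xi\<bar>"
  define G where "G = real_of_int (gcd t (int n))"
  have aq: "approx_quot n xi s t = G / ((real_of_int t)^2 * e)" unfolding approx_quot_def e_def G_def by simp
  have t2: "(real_of_int t)^2 > 0" using assms by simp
  have Gle: "G \<le> real n"
  proof -
    have "gcd t (int n) \<le> int n" using assms by (simp add: gcd_le2_int)
    then show ?thesis unfolding G_def by simp
  qed
  have e0: "e > 0"
  proof (rule ccontr)
    assume "\<not> e > 0" then have "e = 0" unfolding e_def by simp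
    then show False using assms aq by simp
  qed
  have "a \<le> G / ((real_of_int t)^2 * e)" using assms aq by simp
  then have "a * ((real_of_int t)^2 * e) \<le> G" using t2 e0 by (simp add: le_divide_eq)
  then have "e * (a * (real_of_int t)^2) \<le> real n" using Gle by (simp add: algebra_simps)
  then show ?thesis unfolding e_def[symmetric] using t2 assms(3) by (simp add: le_divide_eq)
qed

lemma dist_int_frac:
  fixes y :: real
  shows "\<bar>real_of_int s - y\<bar> \<ge> min (frac y) (1 - frac y)"
proof (cases "s \<le> \<lfloor>y\<rfloor>")
  case True
  then have "real_of_int s \<le> real_of_int \<lfloor>y\<rfloor>" by simp
  then have "y - real_of_int s \<ge> frac y" unfolding frac_def by simp
  then show ?thesis by simp
next
  case False
  then have "real_of_int s \<ge> real_of_int \<lfloor>y\<rfloor> + 1" by simp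
  then have "real_of_int s - y \<ge> 1 - frac y" unfolding frac_def by simp
  then show ?thesis by simp
qed

lemma SM:
  assumes "xi \<notin> \<rat>"
  shows "\<exists>d>0. \<forall>s t. 0 < t \<and> t \<le> int T \<longrightarrow> d \<le> \<bar>real_of_int s / real_of_int t - xi\<bar>"
proof (induction T)
  case 0 then show ?case by (intro exI[of _ 1]) auto
next
  case (Suc T)
  then obtain d where d: "d > 0" "\<forall>s t. 0 < t \<and> t \<le> int T \<longrightarrow> d \<le> \<bar>real_of_int s / real_of_int t - xi\<bar>"
    by blast
  define y where "y = real (Suc T) * xi"
  have yirr: "y \<notin> \<rat>"
  proof
    assume "y \<in> \<rat>"
    then have "y / real (Suc T) \<in> \<rat>" by simp
    then show False using assms unfolding y_def by simp
  qed
  have fpos: "frac y > 0" using frac_irr_pos[OF yirr] .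
  define m where "m = min (frac y) (1 - frac y) / real (Suc T)"
  have mpos: "m > 0" unfolding m_def using fpos frac_lt_1[of y] by simp
  show ?case
  proof (intro exI[of _ "min d m"] conjI allI impI)
    show "min d m > 0" using d mpos by simp
    fix s t assume st: "0 < t \<and> t \<le> int (Suc T)"
    show "min d m \<le> \<bar>real_of_int s / real_of_int t - xi\<bar>"
    proof (cases "t \<le> int T")
      case True
      then have "d \<le> \<bar>real_of_int s / real_of_int t - xi\<bar>" using d(2) st by blast
      then show ?thesis by (simp add: min_le_iff_disj)
    next
      case False
      then have tT: "t = int (Suc T)" using st by simp
      have "\<bar>real_of_int s - y\<bar> \<ge> min (frac y) (1 - frac y)" by (rule dist_int_frac)
      moreover have "real_of_int s / real_of_int t - xi = (real_of_int s - y) / real (Suc T)"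
        unfolding y_def tT by (simp add: field_simps)
      ultimately have "\<bar>real_of_int s / real_of_int t - xi\<bar> \<ge> m"
        unfolding m_def by (simp add: divide_right_mono)
      then show ?thesis by simp
    qed
  qed
qed


lemma QQ_mono: "cfs xi c tau \<Longrightarrow> a \<le> b \<Longrightarrow> QQ c a \<le> QQ c b"
proof -
  assume cf: "cfs xi c tau" and ab: "a \<le> b"
  show ?thesis
    by (rule lift_Suc_mono_le[of "QQ c", OF _ ab]) (use QQ_basic[OF cfs_c1[OF cf]] in blast)
qed

lemma window:
  assumes cf: "cfs xi c tau" and t: "t \<ge> 1"
  shows "\<exists>k\<ge>1. QQ c k \<le> t \<and> t < QQ c (Suc k)"
proof -
  define k where "k = (LEAST k. t < QQ c (Suc k))"
  have ex: "t < QQ c (Suc (Suc (nat t)))"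
    using QQ_grow[OF cfs_c1[OF cf], of "Suc (nat t)"] t by simp
  have k1: "t < QQ c (Suc k)" unfolding k_def by (rule LeastI[of "\<lambda>k. t < QQ c (Suc k)", OF ex])
  have "k \<noteq> 0"
  proof
    assume "k = 0" then show False using k1 t by simp
  qed
  then obtain j where j: "k = Suc j" by (cases k) auto
  have "\<not> t < QQ c (Suc j)"
  proof
    assume "t < QQ c (Suc j)"
    then have "k \<le> j" unfolding k_def by (rule Least_le)
    then show False using j by simp
  qed
  then show ?thesis using k1 j by (intro exI[of _ k]) auto
qed

lemma window_large:
  assumes cf: "cfs xi c tau" and "QQ c (Suc M) \<le> t" "t < QQ c (Suc k)"
  shows "k > M"
proof (rule ccontr)
  assume "\<not> k > M"
  then have "QQ c (Suc k) \<le> QQ c (Suc M)" using QQ_mono[OF cf] by simp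
  then show False using assms by simp
qed

lemma conv:
  assumes cf: "cfs xi c tau" and n: "n > 0" and k: "k \<ge> 1"
  shows "approx_quot n xi (PP c k) (QQ c k) \<ge> real_of_int (c k)"
    and "0 < \<bar>real_of_int (PP c k) / real_of_int (QQ c k) - xi\<bar>"
    and "\<bar>real_of_int (PP c k) / real_of_int (QQ c k) - xi\<bar> \<le> 1 / real k"
proof -
  define Q0 where "Q0 = real_of_int (QQ c k)"
  define Q1 where "Q1 = real_of_int (QQ c (Suc k))"
  define E where "E = \<bar>EE xi c k\<bar>"
  have Q0p: "QQ c k \<ge> 1" using QQ_pos[OF cfs_c1[OF cf] k] .
  then have Q0r: "Q0 \<ge> 1" unfolding Q0_def by simp
  have E0: "E > 0" unfolding E_def using EE_nz[OF cf] by simp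
  have EQ: "E * Q1 \<le> 1" unfolding E_def Q1_def by (rule EE_le[OF cf])
  have cQ: "real_of_int (c k) * Q0 \<le> Q1"
  proof -
    obtain j where j: "k = Suc j" using k by (cases k) auto
    have "QQ c (Suc k) = c k * QQ c k + QQ c j" using j by simp
    moreover have "QQ c j \<ge> 0" using QQ_basic[OF cfs_c1[OF cf], of j] by simp
    ultimately have "c k * QQ c k \<le> QQ c (Suc k)" by simp
    then show ?thesis unfolding Q0_def Q1_def by (metis of_int_le_iff of_int_mult)
  qed
  have ck: "real_of_int (c k) \<ge> 1" using cfs_c[OF cf k] by simp
  have diff: "\<bar>real_of_int (QQ c k) * xi - real_of_int (PP c k)\<bar> = E" unfolding E_def EE_def ..
  define G where "G = real_of_int (gcd (QQ c k) (int n))"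
  have G1: "G \<ge> 1"
  proof -
    have "gcd (QQ c k) (int n) > 0" using n by simp
    then show ?thesis unfolding G_def by linarith
  qed
  have aq: "approx_quot n xi (PP c k) (QQ c k) = G / (Q0 * E)"
    using aq_eq[of "QQ c k" n xi "PP c k"] Q0p diff unfolding G_def Q0_def by simp
  have "real_of_int (c k) * (Q0 * E) \<le> 1"
  proof -
    have "real_of_int (c k) * Q0 * E \<le> Q1 * E" using cQ E0 by (simp add: mult_right_mono)
    then show ?thesis using EQ by (simp add: algebra_simps)
  qed
  then have "real_of_int (c k) \<le> 1 / (Q0 * E)" using Q0r E0 by (simp add: le_divide_eq)
  also have "\<dots> \<le> G / (Q0 * E)" using G1 Q0r E0 by (simp add: divide_right_mono)
  finally show "approx_quot n xi (PP c k) (QQ c k) \<ge> real_of_int (c k)" using aq by simp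
  have eq: "\<bar>real_of_int (PP c k) / real_of_int (QQ c k) - xi\<bar> = E / Q0"
  proof -
    have "real_of_int (PP c k) / real_of_int (QQ c k) - xi = - (real_of_int (QQ c k) * xi - real_of_int (PP c k)) / Q0"
      unfolding Q0_def using Q0p by (simp add: field_simps)
    then show ?thesis using diff Q0r by simp
  qed
  show "0 < \<bar>real_of_int (PP c k) / real_of_int (QQ c k) - xi\<bar>" using eq E0 Q0r by simp
  have Q1k: "Q1 \<ge> real k" unfolding Q1_def using QQ_grow[OF cfs_c1[OF cf], of k] by simp
  have "E \<le> 1 / Q1" using EQ Q1k k by (simp add: le_divide_eq)
  also have "\<dots> \<le> 1 / real k" using Q1k k by (simp add: frac_le)
  finally have "E \<le> 1 / real k" .
  moreover have "E / Q0 \<le> E" using Q0r E0 by (simp add: divide_le_eq)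
  ultimately show "\<bar>real_of_int (PP c k) / real_of_int (QQ c k) - xi\<bar> \<le> 1 / real k" using eq by simp
qed

lemma lam_ge1:
  assumes cf: "cfs xi c tau" and n: "n > 0"
  shows "lambda_n n xi \<ge> ereal 1"
proof -
  show "lambda_n n xi \<ge> ereal 1"
  proof (rule L2)
    fix d :: real assume d: "d > 0"
    obtain m :: nat where m: "1 / d < real m" using reals_Archimedean2 by blast
    define k where "k = Suc m"
    have k: "k \<ge> 1" unfolding k_def by simp
    have "1 / real k < d"
    proof -
      have "1 / d < real k" using m unfolding k_def by simp
      then show ?thesis using d k by (simp add: divide_less_eq mult.commute)
    qed
    then have "(PP c k, QQ c k) \<in> Sd xi d"
      using conv[OF cf n k] QQ_pos[OF cfs_c1[OF cf] k] unfolding Sd_def by auto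
    moreover have "approx_quot n xi (PP c k) (QQ c k) \<ge> 1"
      using conv(1)[OF cf n k] cfs_c[OF cf k] by linarith
    ultimately show "\<exists>s t. (s,t) \<in> Sd xi d \<and> approx_quot n xi s t \<ge> 1" by blast
  qed
qed

lemma tail_bound:
  assumes cf: "cfs xi c tau" and n: "n > 0" and lam: "lambda_n n xi = ereal mu"
    and mB: "mu + 1 \<le> real B"
  shows "\<exists>K0. \<forall>k\<ge>K0. c k \<le> int B"
proof -
  obtain d where d: "d > 0" "\<forall>s t. (s,t) \<in> Sd xi d \<longrightarrow> approx_quot n xi s t < mu + 1"
    using L3[OF lam, of 1] by auto
  obtain m :: nat where m: "1 / d < real m" using reals_Archimedean2 by blast
  have "\<forall>k\<ge>Suc m. c k \<le> int B"
  proof (intro allI impI)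
    fix k assume km: "k \<ge> Suc m"
    then have k: "k \<ge> 1" by simp
    have "1 / real k < d"
    proof -
      have "1 / d < real k" using m km by simp
      then show ?thesis using d k by (simp add: divide_less_eq mult.commute)
    qed
    then have "(PP c k, QQ c k) \<in> Sd xi d"
      using conv[OF cf n k] QQ_pos[OF cfs_c1[OF cf] k] unfolding Sd_def by auto
    then have "approx_quot n xi (PP c k) (QQ c k) < mu + 1" using d by blast
    then have "real_of_int (c k) < real B" using conv(1)[OF cf n k] mB by linarith
    then show "c k \<le> int B" by linarith
  qed
  then show ?thesis by blast
qed

lemma Phi_ge1:
  assumes cf: "cfs xi c tau" and n: "n > 0" and k: "k \<ge> 1" and ck: "c k \<le> int B"
  shows "PhiB n B c tau k \<ge> 1"
proof -
  define r where "r = rho c k"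
  define h where "h = tau (Suc k)"
  define G where "G = real_of_int (gcd (0 * QQ c (Suc k) + 1 * QQ c k) (int n))"
  have rge: "r \<ge> 1 / (real B + 1)" unfolding r_def by (rule rho_ge[OF cf k ck])
  have rb: "0 \<le> r" "r \<le> 1" unfolding r_def using rho_bounds[OF cf] by auto
  have rpos: "r > 0" using rge by (smt (verit) divide_pos_pos of_nat_0_le_iff)
  have h0: "h > 0" unfolding h_def using cfs_pos[OF cf] by simp
  have G1: "G \<ge> 1"
  proof -
    have "gcd (0 * QQ c (Suc k) + 1 * QQ c k) (int n) > 0" using n by simp
    then show ?thesis unfolding G_def by linarith
  qed
  have A: "G * (1 + r * h) > 0" using G1 rpos h0 by (simp add: add_pos_pos)
  have "NB n B \<ge> 1" unfolding NB_def by simp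
  then have inbox: "(0, 1) \<in> box (NB n B)" unfolding box_def by simp
  have w1: "wt (delB B) (real_of_int 0 + real_of_int 1 * r) = 1"
    using rge unfolding delB_def by (intro wt_one) auto
  have "tm (LamB B) (delB B) 0 1 (gcd (0 * QQ c (Suc k) + 1 * QQ c k) (int n)) r h
        = G * (1 + r * h) / max r (G * (1 + r * h) / LamB B)"
    unfolding tm_def G_def using w1 by simp
  also have "\<dots> = min (LamB B) (G * (1 + r * h) / r)"
    by (rule min_div_max[OF A rpos]) (simp add: LamB_def)
  also have "\<dots> \<ge> 1"
  proof -
    have "LamB B \<ge> 1" unfolding LamB_def by simp
    moreover have "G * (1 + r * h) / r \<ge> 1"
    proof -
      have "r \<le> 1 * 1" using rb by simp
      also have "1 * 1 \<le> G * (1 + r * h)" using G1 rpos h0 by (intro mult_mono) auto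
      finally show ?thesis using rpos by (simp add: le_divide_eq)
    qed
    ultimately show ?thesis by simp
  qed
  finally have "1 \<le> tm (LamB B) (delB B) 0 1 (gcd (0 * QQ c (Suc k) + 1 * QQ c k) (int n)) (rho c k) (tau (Suc k))"
    unfolding r_def h_def .
  also have "\<dots> \<le> PhiB n B c tau k" unfolding PhiB_def by (rule Phi_ge[OF inbox])
  finally show ?thesis .
qed


lemma Phi_pair:
  assumes cf: "cfs xi c tau" and pos: "PhiB n B c tau k > 0"
  shows "\<exists>s t. t > 0 \<and> real_of_int t \<ge> delB B / 2 * QQ c (Suc k) \<and> PhiB n B c tau k \<le> approx_quot n xi s t"
proof -
  have N0: "NB n B \<ge> 0" unfolding NB_def by simp
  obtain u v where uv: "(u,v) \<in> box (NB n B)"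
    "PhiB n B c tau k = tm (LamB B) (delB B) u v (gcd (u * QQ c (Suc k) + v * QQ c k) (int n)) (rho c k) (tau (Suc k))"
    using Phi_attained[OF N0] unfolding PhiB_def by blast
  have "wt (delB B) (u + v * rho c k) \<noteq> 0"
  proof
    assume "wt (delB B) (u + v * rho c k) = 0"
    then have "PhiB n B c tau k = 0" using uv(2) unfolding tm_def by simp
    then show False using pos by simp
  qed
  moreover have "wt (delB B) (u + v * rho c k) \<ge> 0" by (rule wt_ge0)
  ultimately have w: "wt (delB B) (u + v * rho c k) > 0" by linarith
  have d: "delB B > 0" "LamB B > 0" unfolding delB_def LamB_def by simp_all
  from tm_le_aq[OF cf d w refl refl, of n]
  show ?thesis using uv(2)
    by (intro exI[of _ "u * PP c (Suc k) + v * PP c k"] exI[of _ "u * QQ c (Suc k) + v * QQ c k"]) simp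
qed

lemma close_pair:
  assumes cf: "cfs xi c tau" and n: "n > 0" and t: "t > 0" and a: "a > 0" and d: "d > 0"
    and aq: "approx_quot n xi s t \<ge> a" and tl: "real_of_int t > real n / (a * d) + 1"
  shows "(s,t) \<in> Sd xi d"
proof -
  have b: "\<bar>real_of_int s / real_of_int t - xi\<bar> \<le> real n / (a * (real_of_int t)^2)"
    by (rule AB[OF t aq a n])
  have t1: "real_of_int t \<ge> 1" using t by simp
  have "real n / (a * (real_of_int t)^2) \<le> real n / (a * real_of_int t)"
  proof (rule divide_left_mono)
    show "a * real_of_int t \<le> a * (real_of_int t)^2"
      using t1 a by (intro mult_left_mono) (auto simp: power2_eq_square)
  qed (use a t1 in auto)
  also have "\<dots> < d"
  proof -
    have "real n / (a * d) < real_of_int t" using tl by simp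
    then have "real n < real_of_int t * (a * d)" using a d by (simp add: divide_less_eq)
    then show ?thesis using a t1 by (simp add: divide_less_eq algebra_simps)
  qed
  finally have lt: "\<bar>real_of_int s / real_of_int t - xi\<bar> < d" using b by linarith
  have "real_of_int s / real_of_int t \<noteq> xi"
  proof
    assume "real_of_int s / real_of_int t = xi"
    then have "xi \<in> \<rat>" by (metis Rats_divide Rats_of_int)
    then show False using cfs_irrational[OF cf] by simp
  qed
  then have "0 < \<bar>real_of_int s / real_of_int t - xi\<bar>" by simp
  then show ?thesis using lt t unfolding Sd_def by simp
qed

lemma exists_big:
  fixes X :: real
  assumes "D > 0"
  shows "\<exists>M::nat. \<forall>k\<ge>M. D * real k > X"
proof -
  obtain M :: nat where "X / D < real M" using reals_Archimedean2 by blast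
  then have "X < D * real M" using assms by (simp add: divide_less_eq mult.commute)
  then have "\<forall>k\<ge>M. D * real k > X" using assms
    by (smt (verit, ccfv_SIG) mult_left_mono of_nat_le_iff)
  then show ?thesis by blast
qed

lemma QQ_ge_k: "cfs xi c tau \<Longrightarrow> real_of_int (QQ c (Suc k)) \<ge> real k"
  using QQ_grow[OF cfs_c1] by (metis of_int_le_iff of_int_of_nat_eq)

lemma F1a:
  assumes cf: "cfs xi c tau" and n: "n > 0" and lam: "lambda_n n xi = ereal mu"
  shows "\<forall>e>0. \<exists>M. \<forall>k\<ge>M. PhiB n B c tau k \<le> mu + e"
proof (intro allI impI)
  fix e :: real assume e: "e > 0"
  have mu1: "mu \<ge> 1" using lam_ge1[OF cf n] lam by simp
  obtain d where d: "d > 0" "\<forall>s t. (s,t) \<in> Sd xi d \<longrightarrow> approx_quot n xi s t < mu + e"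
    using L3[OF lam e] by auto
  have dB: "delB B / 2 > 0" unfolding delB_def by simp
  obtain M where M: "\<forall>k\<ge>M. delB B / 2 * real k > real n / (1 * d) + 1"
    using exists_big[OF dB] by blast
  have "\<forall>k\<ge>M. PhiB n B c tau k \<le> mu + e"
  proof (intro allI impI)
    fix k assume kM: "k \<ge> M"
    show "PhiB n B c tau k \<le> mu + e"
    proof (cases "PhiB n B c tau k > 0")
      case False then show ?thesis using mu1 e by simp
    next
      case True
      obtain s t where st: "t > 0" "real_of_int t \<ge> delB B / 2 * QQ c (Suc k)"
        "PhiB n B c tau k \<le> approx_quot n xi s t"
        using Phi_pair[OF cf True] by blast
      show ?thesis
      proof (cases "approx_quot n xi s t \<le> mu")
        case True then show ?thesis using st e by simp
      next
        case False
        have "delB B / 2 * real k \<le> delB B / 2 * QQ c (Suc k)"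
          using QQ_ge_k[OF cf, of k] dB by (intro mult_left_mono) auto
        moreover have "real n / (1 * d) + 1 < delB B / 2 * real k" using M kM by blast
        ultimately have tl: "real_of_int t > real n / (1 * d) + 1" using st(2) by linarith
        have "(s,t) \<in> Sd xi d"
          by (rule close_pair[OF cf n st(1) _ d(1) _ tl]) (use False mu1 in auto)
        then show ?thesis using d(2) st(3) by force
      qed
    qed
  qed
  then show "\<exists>M. \<forall>k\<ge>M. PhiB n B c tau k \<le> mu + e" by blast
qed

lemma F1b:
  assumes cf: "cfs xi c tau" and n: "n > 0" and lam: "lambda_n n xi = ereal mu"
    and L: "mu + 1 \<le> LamB B" and K0: "\<forall>k\<ge>K0. c k \<le> int B"
  shows "\<forall>e>0. \<forall>M. \<exists>k\<ge>M. PhiB n B c tau k \<ge> mu - e"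
proof (intro allI impI)
  fix e :: real and M :: nat assume e: "e > 0"
  define e' where "e' = min e (1/2)"
  have e': "e' > 0" "e' \<le> e" "e' \<le> 1/2" unfolding e'_def using e by auto
  have mu1: "mu \<ge> 1" using lam_ge1[OF cf n] lam by simp
  define M' where "M' = max M K0 + 1"
  define T where "T = QQ c (Suc M')"
  have T1: "T \<ge> 1" unfolding T_def using QQ_Suc_pos[OF cf] by (simp add: int_one_le_iff_zero_less)
  obtain d1 where d1: "d1 > 0" "\<forall>s t. 0 < t \<and> t \<le> int (nat T) \<longrightarrow> d1 \<le> \<bar>real_of_int s / real_of_int t - xi\<bar>"
    using SM[OF cfs_irrational[OF cf]] by blast
  obtain s t where st: "(s,t) \<in> Sd xi d1" "approx_quot n xi s t > mu - e'"
    using L4[OF lam e'(1) d1(1)] by blast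
  have tpos: "t > 0" and cl: "\<bar>real_of_int s / real_of_int t - xi\<bar> < d1" using st(1) unfolding Sd_def by auto
  have tT: "t > T"
  proof (rule ccontr)
    assume "\<not> t > T"
    then have "t \<le> int (nat T)" using T1 by simp
    then have "d1 \<le> \<bar>real_of_int s / real_of_int t - xi\<bar>" using d1(2) tpos by blast
    then show False using cl by linarith
  qed
  obtain k where k: "k \<ge> 1" "QQ c k \<le> t" "t < QQ c (Suc k)" using window[OF cf, of t] tT T1 by auto
  have kM: "k > M'" using window_large[OF cf _ k(3), of M'] tT unfolding T_def by simp
  have ck: "c k \<le> int B" "c (Suc (Suc k)) \<le> int B" using K0 kM unfolding M'_def by auto
  have aq2: "approx_quot n xi s t \<ge> 1/2" using st(2) mu1 e' by linarith
  have "PhiB n B c tau k \<ge> min (LamB B) (approx_quot n xi s t)"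
    by (rule LB[OF cf n k(1) ck k(2) k(3) aq2])
  moreover have "min (LamB B) (approx_quot n xi s t) \<ge> mu - e" using L st(2) e' by simp
  ultimately show "\<exists>k\<ge>M. PhiB n B c tau k \<ge> mu - e" using kM unfolding M'_def
    by (intro exI[of _ k]) auto
qed


lemma F2:
  assumes cf: "cfs xi c tau" and n: "n > 0" and K0: "\<forall>k\<ge>K0. c k \<le> int B"
    and L: "mu + 1 \<le> LamB B"
    and up: "\<forall>e>0. \<exists>M. \<forall>k\<ge>M. PhiB n B c tau k \<le> mu + e"
    and lo: "\<forall>e>0. \<forall>M. \<exists>k\<ge>M. PhiB n B c tau k \<ge> mu - e"
  shows "lambda_n n xi = ereal mu"
proof -
  have mu1: "mu \<ge> 1"
  proof (rule ccontr)
    assume "\<not> mu \<ge> 1"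
    define e where "e = (1 - mu) / 2"
    have e: "e > 0" using \<open>\<not> mu \<ge> 1\<close> unfolding e_def by simp
    obtain M where M: "\<forall>k\<ge>M. PhiB n B c tau k \<le> mu + e" using up e by blast
    define k where "k = max M (max K0 1)"
    have "PhiB n B c tau k \<ge> 1" using Phi_ge1[OF cf n, of k B] K0 unfolding k_def by simp
    moreover have "PhiB n B c tau k \<le> mu + e" using M unfolding k_def by simp
    moreover have "mu + e < 1" using \<open>\<not> mu \<ge> 1\<close> unfolding e_def by (simp add: field_simps)
    ultimately show False by linarith
  qed
  have upper: "lambda_n n xi \<le> ereal (mu + e)" if e: "e > 0" for e
  proof -
    define e' where "e' = min e (1/2)"
    have e': "e' > 0" "e' \<le> e" "e' \<le> 1/2" unfolding e'_def using e by auto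
    obtain M where M: "\<forall>k\<ge>M. PhiB n B c tau k \<le> mu + e'" using up e'(1) by blast
    define M' where "M' = max M K0 + 1"
    define T where "T = QQ c (Suc M')"
    have T1: "T \<ge> 1" unfolding T_def using QQ_Suc_pos[OF cf] by (simp add: int_one_le_iff_zero_less)
    obtain d1 where d1: "d1 > 0" "\<forall>s t. 0 < t \<and> t \<le> int (nat T) \<longrightarrow> d1 \<le> \<bar>real_of_int s / real_of_int t - xi\<bar>"
      using SM[OF cfs_irrational[OF cf]] by blast
    show ?thesis
    proof (rule L1[OF d1(1)])
      fix s t assume st: "(s,t) \<in> Sd xi d1"
      have tpos: "t > 0" and cl: "\<bar>real_of_int s / real_of_int t - xi\<bar> < d1" using st unfolding Sd_def by auto
      have tT: "t > T"
      proof (rule ccontr)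
        assume "\<not> t > T"
        then have "t \<le> int (nat T)" using T1 by simp
        then have "d1 \<le> \<bar>real_of_int s / real_of_int t - xi\<bar>" using d1(2) tpos by blast
        then show False using cl by linarith
      qed
      show "approx_quot n xi s t \<le> mu + e"
      proof (cases "approx_quot n xi s t < 1/2")
        case True then show ?thesis using mu1 e by simp
      next
        case False
        then have aq2: "approx_quot n xi s t \<ge> 1/2" by simp
        obtain k where k: "k \<ge> 1" "QQ c k \<le> t" "t < QQ c (Suc k)" using window[OF cf, of t] tT T1 by auto
        have kM: "k > M'" using window_large[OF cf _ k(3), of M'] tT unfolding T_def by simp
        have ck: "c k \<le> int B" "c (Suc (Suc k)) \<le> int B" using K0 kM unfolding M'_def by auto
        have "PhiB n B c tau k \<ge> min (LamB B) (approx_quot n xi s t)"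
          by (rule LB[OF cf n k(1) ck k(2) k(3) aq2])
        moreover have "PhiB n B c tau k \<le> mu + e'" using M kM unfolding M'_def by simp
        ultimately have "min (LamB B) (approx_quot n xi s t) \<le> mu + e'" by simp
        moreover have "mu + e' < LamB B" using L e' by simp
        ultimately have "approx_quot n xi s t \<le> mu + e'" by (simp add: min_def split: if_splits)
        then show ?thesis using e' by simp
      qed
    qed
  qed
  have lower: "lambda_n n xi \<ge> ereal (mu - e)" if e: "e > 0" "e \<le> 1/2" for e
  proof (rule L2)
    fix d :: real assume d: "d > 0"
    have dB: "delB B / 2 > 0" unfolding delB_def by simp
    obtain M where M: "\<forall>k\<ge>M. delB B / 2 * real k > real n / (1/2 * d) + 1"
      using exists_big[OF dB] by blast
    obtain k where k: "k \<ge> max M 1" "PhiB n B c tau k \<ge> mu - e" using lo e by blast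
    have pos: "PhiB n B c tau k > 0" using k(2) mu1 e by simp
    obtain s t where st: "t > 0" "real_of_int t \<ge> delB B / 2 * QQ c (Suc k)"
        "PhiB n B c tau k \<le> approx_quot n xi s t"
      using Phi_pair[OF cf pos] by blast
    have "delB B / 2 * real k \<le> delB B / 2 * QQ c (Suc k)"
      using QQ_ge_k[OF cf, of k] dB by (intro mult_left_mono) auto
    moreover have "real n / (1/2 * d) + 1 < delB B / 2 * real k" using M k(1) by simp
    ultimately have tl: "real_of_int t > real n / (1/2 * d) + 1" using st(2) by linarith
    have aq: "approx_quot n xi s t \<ge> 1/2" using st(3) k(2) mu1 e by linarith
    have "(s,t) \<in> Sd xi d" by (rule close_pair[OF cf n st(1) _ d aq tl]) simp
    then show "\<exists>s t. (s,t) \<in> Sd xi d \<and> approx_quot n xi s t \<ge> mu - e" using st(3) k(2) by force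
  qed
  have "lambda_n n xi \<le> ereal (mu + 1)" using upper[of 1] by simp
  moreover have "lambda_n n xi \<ge> ereal (mu - 1/2)" using lower[of "1/2"] by simp
  ultimately obtain l where l: "lambda_n n xi = ereal l" by (cases "lambda_n n xi") auto
  have "l \<le> mu"
  proof (rule field_le_epsilon)
    fix e :: real assume "e > 0" then show "l \<le> mu + e" using upper[of e] l by simp
  qed
  moreover have "mu \<le> l"
  proof (rule field_le_epsilon)
    fix e :: real assume e: "e > 0"
    have "ereal (mu - min e (1/2)) \<le> ereal l" using lower[of "min e (1/2)"] e l by simp
    then show "mu \<le> l + e" by simp
  qed
  ultimately show ?thesis using l by simp
qed


lemma hh_range: "a \<ge> 1 \<Longrightarrow> 0 \<le> x \<Longrightarrow> 0 < hh a x \<and> hh a x \<le> 1"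
  unfolding hh_def by (simp add: divide_le_eq_1)

lemma hh_diff: "a \<ge> 1 \<Longrightarrow> 0 \<le> x \<Longrightarrow> 0 \<le> y \<Longrightarrow>
   hh a x - hh a y = (y - x) / ((a + x) * (a + y))"
  unfolding hh_def by (simp add: field_simps)

lemma hh_lip: "a \<ge> 1 \<Longrightarrow> 0 \<le> x \<Longrightarrow> 0 \<le> y \<Longrightarrow> \<bar>hh a x - hh a y\<bar> \<le> \<bar>x - y\<bar>"
proof -
  assume a: "a \<ge> 1" "0 \<le> x" "0 \<le> y"
  have p: "(a + x) * (a + y) \<ge> 1 * 1" using a by (intro mult_mono) auto
  have "\<bar>hh a x - hh a y\<bar> = \<bar>y - x\<bar> / ((a + x) * (a + y))" using hh_diff[OF a] a by simp
  also have "\<dots> \<le> \<bar>y - x\<bar> / 1" using p by (intro divide_left_mono) auto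
  finally show ?thesis by simp
qed

lemma hh2:
  assumes a: "a \<ge> 1" and b: "b \<ge> 1" and x: "0 \<le> x" and y: "0 \<le> y"
  shows "\<bar>hh a (hh b x) - hh a (hh b y)\<bar> \<le> \<bar>x - y\<bar> / 4"
proof -
  define X where "X = hh b x"
  define Y where "Y = hh b y"
  have X: "0 < X" "X * (b + x) = 1" unfolding X_def hh_def using b x by auto
  have Y: "0 < Y" "Y * (b + y) = 1" unfolding Y_def hh_def using b y by auto
  have pa: "(a + X) * (a + Y) > 0" using a X Y by simp
  have d1: "\<bar>hh a X - hh a Y\<bar> = \<bar>X - Y\<bar> / ((a + X) * (a + Y))"
    using hh_diff[OF a, of X Y] X Y pa by (simp add: abs_divide abs_minus_commute)
  have pb: "(b + x) * (b + y) > 0" using b x y by simp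
  have d2: "\<bar>X - Y\<bar> = \<bar>x - y\<bar> / ((b + x) * (b + y))"
    using hh_diff[OF b x y] pb unfolding X_def Y_def by (simp add: abs_divide abs_minus_commute)
  have e1: "(a + X) * (b + x) \<ge> 2"
  proof -
    have "(a + X) * (b + x) = a * (b + x) + 1" using X by (simp add: algebra_simps)
    moreover have "a * (b + x) \<ge> 1 * 1" using a b x by (intro mult_mono) auto
    ultimately show ?thesis by simp
  qed
  have e2: "(a + Y) * (b + y) \<ge> 2"
  proof -
    have "(a + Y) * (b + y) = a * (b + y) + 1" using Y by (simp add: algebra_simps)
    moreover have "a * (b + y) \<ge> 1 * 1" using a b y by (intro mult_mono) auto
    ultimately show ?thesis by simp
  qed
  have "\<bar>hh a X - hh a Y\<bar> = \<bar>x - y\<bar> / (((a + X) * (b + x)) * ((a + Y) * (b + y)))"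
    using d1 d2 by (simp add: field_simps)
  also have "\<dots> \<le> \<bar>x - y\<bar> / (2 * 2)"
  proof (rule divide_left_mono)
    show "2 * 2 \<le> (a + X) * (b + x) * ((a + Y) * (b + y))" using e1 e2 by (intro mult_mono) auto
  next
    have "0 < (a + X) * (b + x)" "0 < (a + Y) * (b + y)" using e1 e2 by linarith+
    then have "0 < (a + X) * (b + x) * ((a + Y) * (b + y))" by (rule mult_pos_pos)
    then show "0 < (a + X) * (b + x) * ((a + Y) * (b + y)) * (2 * 2)" by simp
  qed simp
  finally show ?thesis unfolding X_def Y_def by simp
qed

primrec hcomp :: "(nat \<Rightarrow> int) \<Rightarrow> nat \<Rightarrow> nat \<Rightarrow> real \<Rightarrow> real" where
  "hcomp c k 0 x = x"
| "hcomp c k (Suc m) x = hh (c k) (hcomp c (Suc k) m x)"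

lemma hcomp_range:
  assumes "\<forall>i\<ge>k. c i \<ge> 1" "0 \<le> x" "x \<le> 1"
  shows "0 \<le> hcomp c k m x \<and> hcomp c k m x \<le> 1"
  using assms
proof (induction m arbitrary: k)
  case 0 then show ?case by simp
next
  case (Suc m)
  have "0 \<le> hcomp c (Suc k) m x" using Suc by simp
  moreover have "real_of_int (c k) \<ge> 1" using Suc.prems by simp
  ultimately show ?case using hh_range by fastforce
qed

lemma hcomp_split: "hcomp c k (m + m') x = hcomp c k m (hcomp c (k + m) m' x)"
  by (induction m arbitrary: k) auto

lemma hcomp_contract2:
  assumes "\<forall>i\<ge>k. c i \<ge> 1" "0 \<le> x" "x \<le> 1" "0 \<le> y" "y \<le> 1"
  shows "\<bar>hcomp c k (2 * j) x - hcomp c k (2 * j) y\<bar> \<le> (1/4) ^ j"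
  using assms
proof (induction j arbitrary: k)
  case 0 then show ?case by simp
next
  case (Suc j)
  have "2 * Suc j = Suc (Suc (2 * j))" by simp
  then have eq: "\<And>z. hcomp c k (2 * Suc j) z = hh (c k) (hh (c (Suc k)) (hcomp c (Suc (Suc k)) (2 * j) z))"
    by simp
  have r: "0 \<le> hcomp c (Suc (Suc k)) (2 * j) x" "0 \<le> hcomp c (Suc (Suc k)) (2 * j) y"
    using hcomp_range Suc.prems by auto
  have "\<bar>hcomp c k (2 * Suc j) x - hcomp c k (2 * Suc j) y\<bar>
      \<le> \<bar>hcomp c (Suc (Suc k)) (2 * j) x - hcomp c (Suc (Suc k)) (2 * j) y\<bar> / 4"
    unfolding eq by (rule hh2) (use Suc.prems r in auto)
  also have "\<dots> \<le> (1/4) ^ j / 4" using Suc by simp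
  finally show ?case by simp
qed

lemma hcomp_contract:
  assumes "\<forall>i\<ge>k. c i \<ge> 1" "0 \<le> x" "x \<le> 1" "0 \<le> y" "y \<le> 1"
  shows "\<bar>hcomp c k m x - hcomp c k m y\<bar> \<le> (1/4) ^ (m div 2)"
proof (cases "even m")
  case True
  then obtain j where "m = 2 * j" by blast
  then show ?thesis using hcomp_contract2[OF assms] by simp
next
  case False
  then obtain j where m: "m = Suc (2 * j)" by (metis oddE Suc_eq_plus1)
  have r: "0 \<le> hcomp c (Suc k) (2 * j) x" "0 \<le> hcomp c (Suc k) (2 * j) y"
    using hcomp_range assms by auto
  have "\<bar>hcomp c k m x - hcomp c k m y\<bar> \<le> \<bar>hcomp c (Suc k) (2 * j) x - hcomp c (Suc k) (2 * j) y\<bar>"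
    unfolding m using r assms by (simp add: hh_lip)
  also have "\<dots> \<le> (1/4) ^ j" by (rule hcomp_contract2) (use assms in auto)
  finally show ?thesis using m by simp
qed

lemma small_pow: "e > 0 \<Longrightarrow> \<exists>M. \<forall>m\<ge>M. ((1::real)/4) ^ (m div 2) < e"
proof -
  assume e: "e > 0"
  obtain j where j: "((1::real)/4) ^ j < e" using real_arch_pow_inv[OF e, of "1/4"] by auto
  have "\<forall>m\<ge>2*j. ((1::real)/4) ^ (m div 2) < e"
  proof (intro allI impI)
    fix m :: nat assume "m \<ge> 2 * j"
    then have "j \<le> m div 2" by simp
    then have le: "((1::real)/4) ^ (m div 2) \<le> (1/4) ^ j" by (intro power_decreasing) auto
    show "((1::real)/4) ^ (m div 2) < e" using le j by linarith
  qed
  then show ?thesis by blast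
qed

lemma hcomp_Cauchy:
  assumes "\<forall>i\<ge>k. c i \<ge> 1"
  shows "Cauchy (\<lambda>m. hcomp c k m 0)"
proof (rule CauchyI)
  fix e :: real assume e: "e > 0"
  obtain M where M: "\<forall>m\<ge>M. ((1::real)/4) ^ (m div 2) < e" using small_pow[OF e] by blast
  have "\<forall>m\<ge>M. \<forall>m'\<ge>M. norm (hcomp c k m 0 - hcomp c k m' 0) < e"
  proof (intro allI impI)
    fix m m' assume mM: "m \<ge> M" "m' \<ge> M"
    have gen: "\<bar>hcomp c k a 0 - hcomp c k b 0\<bar> < e" if ab: "a \<le> b" "a \<ge> M" for a b
    proof -
      have "hcomp c k b 0 = hcomp c k a (hcomp c (k + a) (b - a) 0)"
        using hcomp_split[of c k a "b - a" 0] ab by simp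
      moreover have "0 \<le> hcomp c (k + a) (b - a) 0 \<and> hcomp c (k + a) (b - a) 0 \<le> 1"
        by (rule hcomp_range) (use assms in auto)
      ultimately have "\<bar>hcomp c k a 0 - hcomp c k b 0\<bar> \<le> (1/4) ^ (a div 2)"
        using hcomp_contract[OF assms, of 0 "hcomp c (k + a) (b - a) 0" a] by simp
      also have "\<dots> < e" using M ab by simp
      finally show ?thesis .
    qed
    show "norm (hcomp c k m 0 - hcomp c k m' 0) < e"
    proof (cases "m \<le> m'")
      case True then show ?thesis using gen[of m m'] mM by simp
    next
      case False then show ?thesis using gen[of m' m] mM by (simp add: abs_minus_commute)
    qed
  qed
  then show "\<exists>M. \<forall>m\<ge>M. \<forall>n\<ge>M. norm (hcomp c k m 0 - hcomp c k n 0) < e" by blast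
qed

lemma cf_construct:
  assumes c1: "\<forall>k\<ge>1. c k \<ge> 1"
  shows "\<exists>tau. cfs (real_of_int (c 0) + tau 1) c tau"
proof -
  define tau where "tau = (\<lambda>k. lim (\<lambda>m. hcomp c k m 0))"
  have lim: "(\<lambda>m. hcomp c k m 0) \<longlonglongrightarrow> tau k" if k: "k \<ge> 1" for k
  proof -
    have "\<forall>i\<ge>k. c i \<ge> 1" using c1 k by auto
    then have "convergent (\<lambda>m. hcomp c k m 0)" using hcomp_Cauchy Cauchy_convergent_iff by blast
    then show ?thesis unfolding tau_def by (simp add: convergent_LIMSEQ_iff)
  qed
  have rng: "0 \<le> tau k \<and> tau k \<le> 1" if k: "k \<ge> 1" for k
  proof -
    have r: "\<forall>m. 0 \<le> hcomp c k m 0 \<and> hcomp c k m 0 \<le> 1"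
      using hcomp_range[of k c 0] c1 k by auto
    have "0 \<le> tau k" by (rule LIMSEQ_le_const[OF lim[OF k]]) (use r in auto)
    moreover have "tau k \<le> 1" by (rule LIMSEQ_le_const2[OF lim[OF k]]) (use r in auto)
    ultimately show ?thesis by simp
  qed
  have rec: "tau k = hh (c k) (tau (Suc k))" if k: "k \<ge> 1" for k
  proof -
    have l1: "(\<lambda>m. hcomp c k (Suc m) 0) \<longlonglongrightarrow> tau k" using lim[OF k] by (rule LIMSEQ_Suc)
    have ck: "real_of_int (c k) \<ge> 1" using c1 k by simp
    have nz: "real_of_int (c k) + tau (Suc k) \<noteq> 0" using ck rng[of "Suc k"] by simp
    have "(\<lambda>m. hh (c k) (hcomp c (Suc k) m 0)) \<longlonglongrightarrow> hh (c k) (tau (Suc k))"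
      unfolding hh_def by (intro tendsto_intros lim) (use nz in auto)
    then have "(\<lambda>m. hcomp c k (Suc m) 0) \<longlonglongrightarrow> hh (c k) (tau (Suc k))" by simp
    then show ?thesis using l1 LIMSEQ_unique by blast
  qed
  have pos: "0 < tau k" if k: "k \<ge> 1" for k
    using rec[OF k] hh_range[of "c k" "tau (Suc k)"] c1 k rng[of "Suc k"] by auto
  have lt1: "tau k < 1" if k: "k \<ge> 1" for k
  proof -
    have "real_of_int (c k) \<ge> 1" using c1 k by simp
    then have "real_of_int (c k) + tau (Suc k) > 1" using pos[of "Suc k"] by simp
    then show ?thesis using rec[OF k] unfolding hh_def by simp
  qed
  have "cfs (real_of_int (c 0) + tau 1) c tau"
    unfolding cfs_def using c1 pos lt1 rec by blast
  then show ?thesis by blast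
qed


lemma rho_rec:
  assumes cf: "cfs xi c tau"
  shows "rho c (Suc i) = hh (c (Suc i)) (rho c i)"
proof -
  have q: "real_of_int (QQ c (Suc i)) > 0" using QQ_Suc_pos[OF cf, of i] by simp
  have "real_of_int (QQ c (Suc (Suc i))) = c (Suc i) * QQ c (Suc i) + QQ c i" by simp
  then show ?thesis unfolding rho_def hh_def using q by (simp add: field_simps)
qed

lemma rho_window:
  assumes cf: "cfs xi c tau" and cf': "cfs xi' c' tau'"
  shows "(\<forall>e<2*j. c (i - e) = c' (i' - e)) \<Longrightarrow> 2*j \<le> i \<Longrightarrow> 2*j \<le> i' \<Longrightarrow>
         \<bar>rho c i - rho c' i'\<bar> \<le> (1/4) ^ j"
proof (induction j arbitrary: i i')
  case 0
  then show ?case using rho_bounds[OF cf, of i] rho_bounds[OF cf', of i'] by (simp add: abs_le_iff)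
next
  case (Suc j)
  define i0 where "i0 = i - 2"
  define i0' where "i0' = i' - 2"
  have i0: "i = Suc (Suc i0)" using Suc.prems(2) unfolding i0_def by simp
  have i0': "i' = Suc (Suc i0')" using Suc.prems(3) unfolding i0'_def by simp
  have l0: "c i = c' i'" using Suc.prems(1)[rule_format, of 0] by simp
  have l1: "c (Suc i0) = c' (Suc i0')" using Suc.prems(1)[rule_format, of 1] i0 i0' by simp
  have IH: "\<bar>rho c i0 - rho c' i0'\<bar> \<le> (1/4) ^ j"
  proof (rule Suc.IH)
    show "\<forall>e<2 * j. c (i0 - e) = c' (i0' - e)"
    proof (intro allI impI)
      fix e assume "e < 2 * j"
      then have "e + 2 < 2 * Suc j" by simp
      then have "c (i - (e + 2)) = c' (i' - (e + 2))" using Suc.prems(1)[rule_format, of "e + 2"] by simp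
      then show "c (i0 - e) = c' (i0' - e)" using i0 i0' by simp
    qed
    show "2 * j \<le> i0" "2 * j \<le> i0'" using Suc.prems i0 i0' by auto
  qed
  have e1: "rho c i = hh (c i) (hh (c (Suc i0)) (rho c i0))" using rho_rec[OF cf] i0 by simp
  have e2: "rho c' i' = hh (c i) (hh (c (Suc i0)) (rho c' i0'))" using rho_rec[OF cf'] i0' l0 l1 by simp
  have "\<bar>rho c i - rho c' i'\<bar> \<le> \<bar>rho c i0 - rho c' i0'\<bar> / 4"
    unfolding e1 e2 by (rule hh2) (use cfs_c[OF cf] rho_bounds[OF cf] rho_bounds[OF cf'] i0 in auto)
  then show ?case using IH by simp
qed

lemma tau_window:
  assumes cf: "cfs xi c tau" and cf': "cfs xi' c' tau'"
  shows "(\<forall>e<2*j. c (Suc i + e) = c' (Suc i' + e)) \<Longrightarrow> \<bar>tau (Suc i) - tau' (Suc i')\<bar> \<le> (1/4) ^ j"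
proof (induction j arbitrary: i i')
  case 0
  have "0 < tau (Suc i)" "tau (Suc i) < 1" "0 < tau' (Suc i')" "tau' (Suc i') < 1"
    using cfs_pos[OF cf] cfs_lt1[OF cf] cfs_pos[OF cf'] cfs_lt1[OF cf'] by auto
  then show ?case by simp
next
  case (Suc j)
  have l0: "c (Suc i) = c' (Suc i')" using Suc.prems[rule_format, of 0] by simp
  have l1: "c (Suc (Suc i)) = c' (Suc (Suc i'))" using Suc.prems[rule_format, of 1] by simp
  have IH: "\<bar>tau (Suc (Suc (Suc i))) - tau' (Suc (Suc (Suc i')))\<bar> \<le> (1/4) ^ j"
  proof -
    have "\<forall>e<2 * j. c (Suc (Suc (Suc i)) + e) = c' (Suc (Suc (Suc i')) + e)"
    proof (intro allI impI)
      fix e assume "e < 2 * j"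
      then have "e + 2 < 2 * Suc j" by simp
      then have "c (Suc i + (e + 2)) = c' (Suc i' + (e + 2))" using Suc.prems[rule_format, of "e + 2"] by simp
      then show "c (Suc (Suc (Suc i)) + e) = c' (Suc (Suc (Suc i')) + e)" by simp
    qed
    then show ?thesis using Suc.IH[of "Suc (Suc i)" "Suc (Suc i')"] by simp
  qed
  have e1: "tau (Suc i) = hh (c (Suc i)) (hh (c (Suc (Suc i))) (tau (Suc (Suc (Suc i)))))"
    using cfs_rec[OF cf, of "Suc i"] cfs_rec[OF cf, of "Suc (Suc i)"] by simp
  have e2: "tau' (Suc i') = hh (c (Suc i)) (hh (c (Suc (Suc i))) (tau' (Suc (Suc (Suc i')))))"
    using cfs_rec[OF cf', of "Suc i'"] cfs_rec[OF cf', of "Suc (Suc i')"] l0 l1 by simp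
  have "\<bar>tau (Suc i) - tau' (Suc i')\<bar> \<le> \<bar>tau (Suc (Suc (Suc i))) - tau' (Suc (Suc (Suc i')))\<bar> / 4"
    unfolding e1 e2 by (rule hh2) (use cfs_c[OF cf] cfs_pos[OF cf] cfs_pos[OF cf'] in \<open>auto simp: less_imp_le\<close>)
  then show ?case using IH by simp
qed

definition DD :: "nat \<Rightarrow> (real \<times> real) set" where
  "DD B = {1 / (real B + 1)..1} \<times> {1 / (real B + 1)..1}"

lemma tm_cont:
  assumes L: "L > 0" and d: "d > 0" and G: "G \<ge> 1"
  shows "continuous_on (DD B) (\<lambda>p. tm L d u v G (fst p) (snd p))"
proof -
  have pos: "\<forall>p\<in>DD B. 1 + fst p * snd p > 0"
  proof
    fix p assume "p \<in> DD B"
    then have b: "fst p \<ge> 1 / (real B + 1)" "snd p \<ge> 1 / (real B + 1)" unfolding DD_def by (auto simp: mem_Times_iff)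
    have "(0::real) < 1 / (real B + 1)" by simp
    then have "fst p \<ge> 0" "snd p \<ge> 0" using b by linarith+
    then show "1 + fst p * snd p > 0" by (simp add: add_pos_nonneg)
  qed
  have nz: "\<forall>p\<in>DD B. max ((u + v * fst p) * \<bar>v - u * snd p\<bar>) (G * (1 + fst p * snd p) / L) \<noteq> 0"
  proof
    fix p assume "p \<in> DD B"
    then have "G * (1 + fst p * snd p) / L > 0" using pos G L by simp
    moreover have "max ((u + v * fst p) * \<bar>v - u * snd p\<bar>) (G * (1 + fst p * snd p) / L)
        \<ge> G * (1 + fst p * snd p) / L" by (rule max.cobounded2)
    ultimately show "max ((u + v * fst p) * \<bar>v - u * snd p\<bar>) (G * (1 + fst p * snd p) / L) \<noteq> 0"
      by linarith
  qed
  have c1: "continuous_on (DD B) (\<lambda>p. min 1 (max 0 (2 * (u + v * fst p) / d - 1)))"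
    by (intro continuous_intros) (use d in simp)
  have c2: "continuous_on (DD B) (\<lambda>p. max ((u + v * fst p) * \<bar>v - u * snd p\<bar>) (G * (1 + fst p * snd p) / L))"
    by (intro continuous_intros) (use L in simp)
  have c3: "continuous_on (DD B) (\<lambda>p. (G * (1 + fst p * snd p)) /
      max ((u + v * fst p) * \<bar>v - u * snd p\<bar>) (G * (1 + fst p * snd p) / L))"
    by (rule continuous_on_divide[OF _ c2 nz]) (intro continuous_intros)
  have "continuous_on (DD B) (\<lambda>p. min 1 (max 0 (2 * (u + v * fst p) / d - 1)) * ((G * (1 + fst p * snd p)) /
      max ((u + v * fst p) * \<bar>v - u * snd p\<bar>) (G * (1 + fst p * snd p) / L)))"
    by (rule continuous_on_mult[OF c1 c3])
  then show ?thesis unfolding tm_def wt_def by simp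
qed

lemma finite_eta_aux:
  fixes P :: "'a \<Rightarrow> real \<Rightarrow> bool"
  assumes M: "\<forall>x eta eta'. 0 < eta' \<and> eta' \<le> eta \<and> P x eta \<longrightarrow> P x eta'"
  shows "finite F \<Longrightarrow> (\<forall>x\<in>F. \<exists>eta>0. P x eta) \<longrightarrow> (\<exists>eta>0. \<forall>x\<in>F. P x eta)"
proof (induction F rule: finite_induct)
  case empty
  have "(1::real) > 0" by simp
  then show ?case by blast
next
  case (insert a F)
  show ?case
  proof
    assume h: "\<forall>x\<in>insert a F. \<exists>eta>0. P x eta"
    then have "\<forall>x\<in>F. \<exists>eta>0. P x eta" by blast
    then obtain e1 where e1: "e1 > 0" "\<forall>x\<in>F. P x e1" using insert.IH by blast
    obtain e2 where e2: "e2 > 0" "P a e2" using h by blast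
    have m: "0 < min e1 e2" "min e1 e2 \<le> e1" "min e1 e2 \<le> e2" using e1 e2 by auto
    have "\<forall>x\<in>insert a F. P x (min e1 e2)"
    proof
      fix x assume x: "x \<in> insert a F"
      show "P x (min e1 e2)"
      proof (cases "x = a")
        case True
        then show ?thesis using M m(1) m(3) e2(2) by blast
      next
        case False
        then have "P x e1" using x e1 by blast
        then show ?thesis using M m(1) m(2) by blast
      qed
    qed
    then show "\<exists>eta>0. \<forall>x\<in>insert a F. P x eta" using m(1) by blast
  qed
qed

lemma finite_eta:
  fixes P :: "'a \<Rightarrow> real \<Rightarrow> bool"
  assumes "finite F" "\<forall>x\<in>F. \<exists>eta>0. P x eta" "\<forall>x eta eta'. 0 < eta' \<and> eta' \<le> eta \<and> P x eta \<longrightarrow> P x eta'"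
  shows "\<exists>eta>0. \<forall>x\<in>F. P x eta"
  using finite_eta_aux[of P, OF assms(3) assms(1)] assms(2) by blast

lemma Max_diff:
  assumes "finite A" "A \<noteq> {}" "\<forall>x\<in>A. \<bar>f x - g x\<bar> < (e::real)"
  shows "\<bar>Max (f ` A) - Max (g ` A)\<bar> < e"
proof -
  have "Max (f ` A) \<in> f ` A" using assms(1,2) by (intro Max_in) auto
  then obtain x where x: "x \<in> A" "Max (f ` A) = f x" by blast
  have "Max (g ` A) \<in> g ` A" using assms(1,2) by (intro Max_in) auto
  then obtain y where y: "y \<in> A" "Max (g ` A) = g y" by blast
  have gx: "g x \<le> Max (g ` A)" using x assms by auto
  have fy: "f y \<le> Max (f ` A)" using y assms by auto
  have "\<bar>f x - g x\<bar> < e" "\<bar>f y - g y\<bar> < e" using assms(3) x y by auto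
  then show ?thesis using gx fy x y by (simp add: abs_less_iff)
qed

lemma gcd_cong:
  assumes "A1 mod int n = A1' mod int n" "A0 mod int n = A0' mod int n"
  shows "gcd (u * A1 + v * A0) (int n) = gcd (u * A1' + v * A0') (int n)"
proof -
  have a1: "(u * A1) mod int n = (u * A1') mod int n" by (rule mod_mult_cong) (use assms in simp_all)
  have a0: "(v * A0) mod int n = (v * A0') mod int n" by (rule mod_mult_cong) (use assms in simp_all)
  have m: "(u * A1 + v * A0) mod int n = (u * A1' + v * A0') mod int n" by (rule mod_add_cong[OF a1 a0])
  have "gcd (u * A1 + v * A0) (int n) = gcd (int n) ((u * A1 + v * A0) mod int n)" by (rule gcd_red_int)
  also have "\<dots> = gcd (int n) ((u * A1' + v * A0') mod int n)" using m by simp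
  also have "\<dots> = gcd (u * A1' + v * A0') (int n)" by (rule gcd_red_int[symmetric])
  finally show ?thesis .
qed

lemma Phi_unif:
  assumes n: "n > 0" and e: "e > 0"
  shows "\<exists>eta>0. \<forall>A1 A0 A1' A0' r h r' h'. A1 mod int n = A1' mod int n \<longrightarrow> A0 mod int n = A0' mod int n
     \<longrightarrow> (r, h) \<in> DD B \<longrightarrow> (r', h') \<in> DD B \<longrightarrow> \<bar>r - r'\<bar> < eta \<longrightarrow> \<bar>h - h'\<bar> < eta
     \<longrightarrow> \<bar>Phi n (LamB B) (delB B) (NB n B) A1 A0 r h - Phi n (LamB B) (delB B) (NB n B) A1' A0' r' h'\<bar> < e"
proof -
  define F where "F = box (NB n B) \<times> {1..int n}"
  have fin: "finite F" unfolding F_def using finite_box by simp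
  define P where "P = (\<lambda>(uv :: (int \<times> int) \<times> int) eta. \<forall>p\<in>DD B. \<forall>q\<in>DD B. dist p q < eta \<longrightarrow>
      \<bar>tm (LamB B) (delB B) (fst (fst uv)) (snd (fst uv)) (snd uv) (fst p) (snd p)
      - tm (LamB B) (delB B) (fst (fst uv)) (snd (fst uv)) (snd uv) (fst q) (snd q)\<bar> < e)"
  have comp: "compact (DD B)" unfolding DD_def by (intro compact_Times compact_Icc)
  have ex: "\<forall>x\<in>F. \<exists>eta>0. P x eta"
  proof
    fix x assume xF: "x \<in> F"
    obtain u v G where x: "x = ((u, v), G)" by (metis prod.collapse)
    have G: "G \<ge> 1" using xF unfolding x F_def by simp
    have L: "LamB B > 0" "delB B > 0" unfolding LamB_def delB_def by simp_all
    have "uniformly_continuous_on (DD B) (\<lambda>p. tm (LamB B) (delB B) u v G (fst p) (snd p))"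
      by (rule compact_uniformly_continuous[OF tm_cont[OF L G] comp])
    then obtain eta where eta: "eta > 0" "\<forall>p\<in>DD B. \<forall>q\<in>DD B. dist q p < eta \<longrightarrow>
        dist (tm (LamB B) (delB B) u v G (fst q) (snd q)) (tm (LamB B) (delB B) u v G (fst p) (snd p)) < e"
      unfolding uniformly_continuous_on_def using e by blast
    have "P x eta" unfolding P_def x using eta(2) by (simp add: dist_real_def dist_commute)
    then show "\<exists>eta>0. P x eta" using eta(1) by blast
  qed
  have mono: "\<forall>x eta eta'. 0 < eta' \<and> eta' \<le> eta \<and> P x eta \<longrightarrow> P x eta'"
  proof (intro allI impI)
    fix x eta eta' assume a: "0 < eta' \<and> eta' \<le> eta \<and> P x eta"
    show "P x eta'" unfolding P_def
    proof (intro ballI impI)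
      fix p q assume pq: "p \<in> DD B" "q \<in> DD B" "dist p q < eta'"
      then have "dist p q < eta" using a by simp
      then show "\<bar>tm (LamB B) (delB B) (fst (fst x)) (snd (fst x)) (snd x) (fst p) (snd p) -
          tm (LamB B) (delB B) (fst (fst x)) (snd (fst x)) (snd x) (fst q) (snd q)\<bar> < e"
        using a pq unfolding P_def by blast
    qed
  qed
  obtain eta where eta: "eta > 0" "\<forall>x\<in>F. P x eta" using finite_eta[OF fin ex mono] by blast
  show ?thesis
  proof (intro exI[of _ "eta / 2"] conjI allI impI)
    show "eta / 2 > 0" using eta by simp
    fix A1 A0 A1' A0' r h r' h'
    assume m: "A1 mod int n = A1' mod int n" "A0 mod int n = A0' mod int n"
      and D: "(r, h) \<in> DD B" "(r', h') \<in> DD B" and cl: "\<bar>r - r'\<bar> < eta / 2" "\<bar>h - h'\<bar> < eta / 2"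
    have dist: "dist (r, h) (r', h') < eta"
    proof -
      have "dist (r, h) (r', h') = sqrt ((r - r')\<^sup>2 + (h - h')\<^sup>2)"
        by (simp add: dist_Pair_Pair dist_real_def)
      also have "\<dots> \<le> \<bar>r - r'\<bar> + \<bar>h - h'\<bar>" by (rule sqrt_sum_squares_le_sum_abs)
      finally show ?thesis using cl by simp
    qed
    let ?f = "\<lambda>(u,v). tm (LamB B) (delB B) u v (gcd (u * A1 + v * A0) (int n)) r h"
    let ?g = "\<lambda>(u,v). tm (LamB B) (delB B) u v (gcd (u * A1' + v * A0') (int n)) r' h'"
    have "\<forall>uv\<in>box (NB n B). \<bar>?f uv - ?g uv\<bar> < e"
    proof
      fix uv assume uv: "uv \<in> box (NB n B)"
      obtain u v where uv': "uv = (u, v)" by (metis prod.collapse)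
      define G where "G = gcd (u * A1 + v * A0) (int n)"
      have G': "gcd (u * A1' + v * A0') (int n) = G" unfolding G_def using gcd_cong[OF m] by simp
      have "G \<ge> 1" unfolding G_def using n by (simp add: int_one_le_iff_zero_less)
      moreover have "G \<le> int n" unfolding G_def using n by (simp add: gcd_le2_int)
      ultimately have "((u, v), G) \<in> F" unfolding F_def using uv uv' by simp
      then have "P ((u, v), G) eta" using eta by blast
      then have "\<forall>p\<in>DD B. \<forall>q\<in>DD B. dist p q < eta \<longrightarrow>
          \<bar>tm (LamB B) (delB B) u v G (fst p) (snd p) - tm (LamB B) (delB B) u v G (fst q) (snd q)\<bar> < e"
        unfolding P_def by simp
      then have "\<bar>tm (LamB B) (delB B) u v G (fst (r,h)) (snd (r,h)) - tm (LamB B) (delB B) u v G (fst (r',h')) (snd (r',h'))\<bar> < e"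
        using D dist by blast
      then have "\<bar>tm (LamB B) (delB B) u v G r h - tm (LamB B) (delB B) u v G r' h'\<bar> < e" by simp
      then show "\<bar>?f uv - ?g uv\<bar> < e" unfolding uv' using G' by (simp add: G_def)
    qed
    moreover have "box (NB n B) \<noteq> {}" by (rule box_ne) (simp add: NB_def)
    ultimately have "\<bar>Max (?f ` box (NB n B)) - Max (?g ` box (NB n B))\<bar> < e"
      by (intro Max_diff finite_box)
    then show "\<bar>Phi n (LamB B) (delB B) (NB n B) A1 A0 r h - Phi n (LamB B) (delB B) (NB n B) A1' A0' r' h'\<bar> < e"
      unfolding Phi_def .
  qed
qed


lemma WIN:
  assumes n: "n > 0" and e: "e > 0"
  shows "\<exists>j. \<forall>xi c tau xi' c' tau' i i'. cfs xi c tau \<longrightarrow> cfs xi' c' tau' \<longrightarrow> 2*j \<le> i \<longrightarrow> 2*j \<le> i'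
    \<longrightarrow> 1 \<le> i \<longrightarrow> 1 \<le> i'
    \<longrightarrow> (\<forall>e<2*j. c (i - e) = c' (i' - e)) \<longrightarrow> (\<forall>e<2*j. c (Suc i + e) = c' (Suc i' + e))
    \<longrightarrow> QQ c (Suc i) mod int n = QQ c' (Suc i') mod int n \<longrightarrow> QQ c i mod int n = QQ c' i' mod int n
    \<longrightarrow> c i \<le> int B \<longrightarrow> c' i' \<le> int B \<longrightarrow> c (Suc i) \<le> int B \<longrightarrow> c' (Suc i') \<le> int B
    \<longrightarrow> \<bar>PhiB n B c tau i - PhiB n B c' tau' i'\<bar> < e"
proof -
  obtain eta where eta: "eta > 0" "\<forall>A1 A0 A1' A0' r h r' h'. A1 mod int n = A1' mod int n \<longrightarrow> A0 mod int n = A0' mod int n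
     \<longrightarrow> (r, h) \<in> DD B \<longrightarrow> (r', h') \<in> DD B \<longrightarrow> \<bar>r - r'\<bar> < eta \<longrightarrow> \<bar>h - h'\<bar> < eta
     \<longrightarrow> \<bar>Phi n (LamB B) (delB B) (NB n B) A1 A0 r h - Phi n (LamB B) (delB B) (NB n B) A1' A0' r' h'\<bar> < e"
    using Phi_unif[OF n e, of B] by blast
  obtain j where j: "((1::real)/4) ^ j < eta" using real_arch_pow_inv[OF eta(1), of "1/4"] by auto
  have inD: "(rho c i, tau (Suc i)) \<in> DD B" if cf: "cfs xi c tau" and i: "1 \<le> i" and b: "c i \<le> int B" "c (Suc i) \<le> int B"
    for xi c tau i
  proof -
    have "rho c i \<ge> 1 / (real B + 1)" by (rule rho_ge[OF cf i b(1)])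
    moreover have "rho c i \<le> 1" using rho_bounds[OF cf] by simp
    moreover have "tau (Suc i) \<ge> 1 / (real B + 1)" by (rule tau_ge[OF cf _ b(2)]) simp
    moreover have "tau (Suc i) \<le> 1" using cfs_lt1[OF cf, of "Suc i"] by simp
    ultimately show ?thesis unfolding DD_def by simp
  qed
  show ?thesis
  proof (intro exI[of _ j] allI impI)
    fix xi c tau xi' c' tau' i i'
    assume cf: "cfs xi c tau" and cf': "cfs xi' c' tau'" and ji: "2*j \<le> i" and ji': "2*j \<le> i'"
      and i1: "1 \<le> i" and i1': "1 \<le> i'"
      and wl: "\<forall>e<2*j. c (i - e) = c' (i' - e)" and wr: "\<forall>e<2*j. c (Suc i + e) = c' (Suc i' + e)"
      and q1: "QQ c (Suc i) mod int n = QQ c' (Suc i') mod int n" and q0: "QQ c i mod int n = QQ c' i' mod int n"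
      and b: "c i \<le> int B" "c' i' \<le> int B" "c (Suc i) \<le> int B" "c' (Suc i') \<le> int B"
    have r: "\<bar>rho c i - rho c' i'\<bar> < eta" using rho_window[OF cf cf' wl ji ji'] j by simp
    have t: "\<bar>tau (Suc i) - tau' (Suc i')\<bar> < eta" using tau_window[OF cf cf' wr] j by simp
    have D: "(rho c i, tau (Suc i)) \<in> DD B" "(rho c' i', tau' (Suc i')) \<in> DD B"
      using inD[OF cf i1 b(1) b(3)] inD[OF cf' i1' b(2) b(4)] by auto
    show "\<bar>PhiB n B c tau i - PhiB n B c' tau' i'\<bar> < e"
      unfolding PhiB_def using eta(2) q1 q0 D r t by blast
  qed
qed


primrec nest :: "'a set \<Rightarrow> (nat \<Rightarrow> 'a \<Rightarrow> 'b option) \<Rightarrow> nat \<Rightarrow> 'a set" where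
  "nest S f 0 = S"
| "nest S f (Suc r) = {i \<in> nest S f r. f (Suc r) i =
      (SOME w. w \<noteq> None \<and> infinite {i \<in> nest S f r. f (Suc r) i = w})}"

lemma nest_sub: "nest S f (Suc r) \<subseteq> nest S f r" by auto

lemma nest_antimono: "r \<le> r' \<Longrightarrow> nest S f r' \<subseteq> nest S f r"
proof (induction r' rule: dec_induct)
  case base then show ?case by simp
next
  case (step k) then show ?case using nest_sub[of S f k] by blast
qed

lemma nest_S: "nest S f r \<subseteq> S"
  using nest_antimono[of 0 r S f] by simp

lemma nest_step:
  assumes A: "infinite (nest S f r)" and fin: "finite (f (Suc r) ` nest S f r)"
    and nn: "finite {i. f (Suc r) i = None}"
  shows "infinite (nest S f (Suc r)) \<and> (\<forall>i\<in>nest S f (Suc r). f (Suc r) i \<noteq> None)"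
proof -
  let ?A = "nest S f r"
  let ?g = "f (Suc r)"
  obtain y where y: "y \<in> ?g ` ?A" "infinite (?g -` {y} \<inter> ?A)" using inf_img_fin_dom'[OF fin A] by blast
  have eq: "?g -` {y} \<inter> ?A = {i \<in> ?A. ?g i = y}" by auto
  have "y \<noteq> None"
  proof
    assume "y = None"
    then have "?g -` {y} \<inter> ?A \<subseteq> {i. ?g i = None}" by auto
    then show False using y(2) nn finite_subset by blast
  qed
  then have ex: "\<exists>w. w \<noteq> None \<and> infinite {i \<in> ?A. ?g i = w}" using y(2) eq by auto
  define W where "W = (SOME w. w \<noteq> None \<and> infinite {i \<in> ?A. ?g i = w})"
  have W: "W \<noteq> None \<and> infinite {i \<in> ?A. ?g i = W}" unfolding W_def by (rule someI_ex[OF ex])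
  have "nest S f (Suc r) = {i \<in> ?A. ?g i = W}" unfolding W_def by simp
  then show ?thesis using W by auto
qed

lemma nest_inf:
  assumes S: "infinite S" and fin: "\<forall>r. finite (f (Suc r) ` S)" and nn: "\<forall>r. finite {i. f (Suc r) i = None}"
  shows "infinite (nest S f r)"
proof (induction r)
  case 0 then show ?case using S by simp
next
  case (Suc r)
  have "finite (f (Suc r) ` nest S f r)" using fin nest_S[of S f r] by (meson finite_subset image_mono)
  then show ?case using nest_step[OF Suc] nn by blast
qed

lemma nest_some:
  assumes S: "infinite S" and fin: "\<forall>r. finite (f (Suc r) ` S)" and nn: "\<forall>r. finite {i. f (Suc r) i = None}"
    and i: "i \<in> nest S f (Suc r)"
  shows "f (Suc r) i \<noteq> None"
proof -
  have "finite (f (Suc r) ` nest S f r)" using fin nest_S[of S f r] by (meson finite_subset image_mono)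
  then show ?thesis using nest_step[OF nest_inf[OF S fin nn]] nn i by blast
qed

lemma nest_common:
  "i \<in> nest S f (Suc r) \<Longrightarrow> i' \<in> nest S f (Suc r) \<Longrightarrow> f (Suc r) i = f (Suc r) i'"
  by simp


primrec Ps :: "(nat \<Rightarrow> nat) \<Rightarrow> (nat \<Rightarrow> nat) \<Rightarrow> nat \<Rightarrow> nat" where
  "Ps p p' 0 = p 0" | "Ps p p' (Suc m) = Ps p p' m + (p' m - p m)"

definition seg :: "(nat \<Rightarrow> nat) \<Rightarrow> (nat \<Rightarrow> nat) \<Rightarrow> nat \<Rightarrow> nat" where
  "seg p p' i = (LEAST m. i \<le> Ps p p' (Suc m))"

definition splice :: "(nat \<Rightarrow> nat \<Rightarrow> int) \<Rightarrow> (nat \<Rightarrow> nat) \<Rightarrow> (nat \<Rightarrow> nat) \<Rightarrow> nat \<Rightarrow> int" where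
  "splice a p p' i = (if i \<le> Ps p p' 0 then a 0 i
      else a (seg p p' i) (i - Ps p p' (seg p p' i) + p (seg p p' i)))"

context
  fixes a :: "nat \<Rightarrow> nat \<Rightarrow> int" and p p' :: "nat \<Rightarrow> nat"
  assumes len: "\<forall>m. p' m \<ge> p m + m + 2"
begin

lemma Ps_mono: "m \<le> m' \<Longrightarrow> Ps p p' m \<le> Ps p p' m'"
  by (rule lift_Suc_mono_le[of "Ps p p'"]) auto

lemma Ps_Suc: "Ps p p' (Suc m) = Ps p p' m + (p' m - p m)" by simp

lemma Ps_ge: "Ps p p' m \<ge> m"
proof (induction m)
  case 0 then show ?case by simp
next
  case (Suc m) then show ?case using len[rule_format, of m] by simp
qed

lemma seg_eq:
  assumes "Ps p p' m < i" "i \<le> Ps p p' (Suc m)"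
  shows "seg p p' i = m"
proof -
  have le: "seg p p' i \<le> m" unfolding seg_def by (rule Least_le) (use assms in simp)
  have ex: "i \<le> Ps p p' (Suc (seg p p' i))" unfolding seg_def
    by (rule LeastI[of "\<lambda>m. i \<le> Ps p p' (Suc m)"]) (use assms in simp)
  show ?thesis
  proof (rule ccontr)
    assume "seg p p' i \<noteq> m"
    then have "Suc (seg p p' i) \<le> m" using le by simp
    then have "Ps p p' (Suc (seg p p' i)) \<le> Ps p p' m" by (rule Ps_mono)
    then show False using ex assms by simp
  qed
qed

lemma splice_seg:
  assumes "Ps p p' m < i" "i \<le> Ps p p' (Suc m)"
  shows "splice a p p' i = a m (i - Ps p p' m + p m)"
proof -
  have "Ps p p' 0 \<le> Ps p p' m" by (rule Ps_mono) simp
  then have "\<not> i \<le> Ps p p' 0" using assms by simp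
  then show ?thesis unfolding splice_def seg_eq[OF assms] by simp
qed

lemma splice_prefix:
  assumes "i \<le> Ps p p' 1"
  shows "splice a p p' i = a 0 i"
proof (cases "i \<le> Ps p p' 0")
  case True then show ?thesis unfolding splice_def by simp
next
  case False
  then have "splice a p p' i = a 0 (i - Ps p p' 0 + p 0)" using splice_seg[of 0 i] assms by simp
  then show ?thesis using False by simp
qed

lemma seg_exists:
  assumes "Ps p p' 0 < i"
  shows "\<exists>m. Ps p p' m < i \<and> i \<le> Ps p p' (Suc m)"
proof -
  define m where "m = (LEAST m. i \<le> Ps p p' (Suc m))"
  have ex: "i \<le> Ps p p' (Suc i)" using Ps_ge[of "Suc i"] by simp
  have m1: "i \<le> Ps p p' (Suc m)" unfolding m_def by (rule LeastI[of "\<lambda>m. i \<le> Ps p p' (Suc m)", OF ex])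
  have "Ps p p' m < i"
  proof (cases m)
    case 0 then show ?thesis using assms by simp
  next
    case (Suc m0)
    have "\<not> i \<le> Ps p p' (Suc m0)"
    proof
      assume "i \<le> Ps p p' (Suc m0)"
      then have "m \<le> m0" unfolding m_def by (rule Least_le)
      then show False using Suc by simp
    qed
    then show ?thesis using Suc by simp
  qed
  then show ?thesis using m1 by blast
qed

lemma splice_window:
  assumes junc: "\<forall>m e. e < Suc m \<longrightarrow> a m (p' m - e) = a (Suc m) (p (Suc m) - e)
                        \<and> a m (p' m + 1 + e) = a (Suc m) (p (Suc m) + 1 + e)"
    and pm: "\<forall>m. p m \<ge> m + 1"
    and m1: "m \<ge> 1" and i1: "Ps p p' m \<le> i" and i2: "i \<le> Ps p p' (Suc m)" and r: "r \<le> m" and e: "e < r"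
  shows "splice a p p' (i - e) = a m (i - Ps p p' m + p m - e)"
    and "splice a p p' (Suc i + e) = a m (Suc (i - Ps p p' m + p m) + e)"
proof -
  have Lm: "p' m \<ge> p m + m + 2" using len by simp
  have PsS: "Ps p p' (Suc m) = Ps p p' m + (p' m - p m)" by simp
  have pmm: "p m \<ge> m + 1" using pm by simp
  show "splice a p p' (i - e) = a m (i - Ps p p' m + p m - e)"
  proof (cases "Ps p p' m < i - e")
    case True
    have "splice a p p' (i - e) = a m (i - e - Ps p p' m + p m)"
      by (rule splice_seg) (use True i2 in auto)
    moreover have "i - e - Ps p p' m + p m = i - Ps p p' m + p m - e" using True by simp
    ultimately show ?thesis by simp
  next
    case False
    obtain m0 where m0: "m = Suc m0" using m1 by (cases m) auto
    have L0: "p' m0 \<ge> p m0 + m0 + 2" using len by simp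
    have Ps_m: "Ps p p' m = Ps p p' m0 + (p' m0 - p m0)" using m0 by simp
    have ie: "e \<le> i" using Ps_ge[of m] i1 e r by simp
    define e0 where "e0 = Ps p p' m - (i - e)"
    have e0: "e0 \<le> e" "e0 < Suc m0" using i1 e r m0 unfolding e0_def by auto
    have lo: "Ps p p' m0 < i - e" using False Ps_m L0 i1 e r m0 by simp
    have "splice a p p' (i - e) = a m0 (i - e - Ps p p' m0 + p m0)"
      by (rule splice_seg) (use lo False Ps_m m0 in auto)
    also have "i - e - Ps p p' m0 + p m0 = p' m0 - e0"
      using lo False Ps_m L0 unfolding e0_def by simp
    also have "a m0 (p' m0 - e0) = a m (p m - e0)" using junc e0 m0 by simp
    also have "p m - e0 = i - Ps p p' m + p m - e" using False i1 ie pmm e r unfolding e0_def by arith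
    finally show ?thesis .
  qed
  show "splice a p p' (Suc i + e) = a m (Suc (i - Ps p p' m + p m) + e)"
  proof (cases "Suc i + e \<le> Ps p p' (Suc m)")
    case True
    have "splice a p p' (Suc i + e) = a m (Suc i + e - Ps p p' m + p m)"
      by (rule splice_seg) (use True i1 in auto)
    moreover have "Suc i + e - Ps p p' m + p m = Suc (i - Ps p p' m + p m) + e" using i1 by arith
    ultimately show ?thesis by metis
  next
    case False
    have L1: "p' (Suc m) \<ge> p (Suc m) + Suc m + 2" using len by blast
    have Ps_SS: "Ps p p' (Suc (Suc m)) = Ps p p' (Suc m) + (p' (Suc m) - p (Suc m))" by simp
    define e0 where "e0 = Suc i + e - Ps p p' (Suc m) - 1"
    have e0: "e0 < Suc m" using i2 e r unfolding e0_def by simp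
    have hi: "Suc i + e \<le> Ps p p' (Suc (Suc m))" using Ps_SS L1 i2 e r by simp
    have "splice a p p' (Suc i + e) = a (Suc m) (Suc i + e - Ps p p' (Suc m) + p (Suc m))"
      by (rule splice_seg) (use False hi in auto)
    also have "Suc i + e - Ps p p' (Suc m) + p (Suc m) = p (Suc m) + 1 + e0"
      using False unfolding e0_def by simp
    also have "a (Suc m) (p (Suc m) + 1 + e0) = a m (p' m + 1 + e0)" using junc e0 by simp
    also have "p' m + 1 + e0 = Suc (i - Ps p p' m + p m) + e"
      using False PsS Lm i1 unfolding e0_def by simp
    finally show ?thesis .
  qed
qed

end


lemma QQ_local:
  "(\<forall>i\<le>k. c i = c' i) \<Longrightarrow> QQ c k = QQ c' k \<and> QQ c (Suc k) = QQ c' (Suc k)"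
proof (induction k)
  case 0 then show ?case by simp
next
  case (Suc k)
  then have IH: "QQ c k = QQ c' k \<and> QQ c (Suc k) = QQ c' (Suc k)" by simp
  have "c (Suc k) = c' (Suc k)" using Suc.prems by simp
  then show ?case using IH by simp
qed

lemma QQ_mod_run:
  assumes b0: "QQ c i mod int n = QQ c' i' mod int n" and b1: "QQ c (Suc i) mod int n = QQ c' (Suc i') mod int n"
    and lt: "\<forall>t. 1 \<le> t \<and> t \<le> s \<longrightarrow> c (i + t) = c' (i' + t)"
  shows "QQ c (i + s) mod int n = QQ c' (i' + s) mod int n \<and> QQ c (Suc (i + s)) mod int n = QQ c' (Suc (i' + s)) mod int n"
  using lt
proof (induction s)
  case 0 then show ?case using b0 b1 by simp
next
  case (Suc s)
  then have IH: "QQ c (i + s) mod int n = QQ c' (i' + s) mod int n \<and> QQ c (Suc (i + s)) mod int n = QQ c' (Suc (i' + s)) mod int n"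
    by simp
  have l: "c (Suc (i + s)) = c' (Suc (i' + s))" using Suc.prems[rule_format, of "Suc s"] by simp
  define a where "a = c (Suc (i + s))"
  have e1: "QQ c (Suc (Suc (i + s))) = a * QQ c (Suc (i + s)) + QQ c (i + s)" unfolding a_def by simp
  have e2: "QQ c' (Suc (Suc (i' + s))) = a * QQ c' (Suc (i' + s)) + QQ c' (i' + s)" unfolding a_def l by simp
  have m1: "(a * QQ c (Suc (i + s))) mod int n = (a * QQ c' (Suc (i' + s))) mod int n"
    by (rule mod_mult_cong) (use IH in simp_all)
  have "(a * QQ c (Suc (i + s)) + QQ c (i + s)) mod int n = (a * QQ c' (Suc (i' + s)) + QQ c' (i' + s)) mod int n"
    by (rule mod_add_cong[OF m1]) (use IH in simp)
  then have "QQ c (Suc (Suc (i + s))) mod int n = QQ c' (Suc (Suc (i' + s))) mod int n"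
    unfolding e1 e2 .
  then show ?case using IH by simp
qed

primrec pick :: "(nat \<Rightarrow> nat set) \<Rightarrow> nat \<Rightarrow> nat" where
  "pick A 0 = (SOME j. j \<in> A 0)"
| "pick A (Suc m) = (SOME j. j \<in> A (Suc m) \<and> pick A m < j)"

lemma pick_props:
  assumes "\<forall>m. infinite (A m)"
  shows "pick A m \<in> A m \<and> pick A m < pick A (Suc m)"
proof -
  have ex: "\<exists>j. j \<in> A k \<and> b < j" for k b
  proof -
    have "infinite (A k)" using assms by blast
    then obtain j where "j \<in> A k" "j > b" using infinite_nat_iff_unbounded by blast
    then show ?thesis by blast
  qed
  have mem: "pick A m \<in> A m" for m
  proof (cases m)
    case 0
    have h: "\<exists>j. j \<in> A 0" using ex by blast
    show ?thesis using someI_ex[OF h] 0 by simp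
  next
    case (Suc m')
    have "pick A (Suc m') \<in> A (Suc m') \<and> pick A m' < pick A (Suc m')"
      unfolding pick.simps by (rule someI_ex[OF ex])
    then show ?thesis using Suc by simp
  qed
  have "pick A (Suc m) \<in> A (Suc m) \<and> pick A m < pick A (Suc m)"
    unfolding pick.simps(2) by (rule someI_ex[OF ex])
  then show ?thesis using mem by simp
qed

lemma map_upt_eq: "map f [0..<r] = map g [0..<r] \<Longrightarrow> \<forall>e<r. f e = g e"
  by (simp add: map_eq_conv)


definition pat :: "nat \<Rightarrow> (nat \<Rightarrow> int) \<Rightarrow> nat \<Rightarrow> nat \<Rightarrow> int \<times> int \<times> int list \<times> int list" where
  "pat n c r i = (QQ c (Suc i) mod int n, QQ c i mod int n, map (\<lambda>e. c (i - e)) [0..<r], map (\<lambda>e. c (Suc i + e)) [0..<r])"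

definition Pat :: "nat \<Rightarrow> nat \<Rightarrow> nat \<Rightarrow> (int \<times> int \<times> int list \<times> int list) set" where
  "Pat n B r = {0..<int n} \<times> {0..<int n} \<times> {xs. set xs \<subseteq> {1..int B} \<and> length xs = r} \<times> {xs. set xs \<subseteq> {1..int B} \<and> length xs = r}"

lemma Pat_finite: "finite (Pat n B r)"
  unfolding Pat_def by (intro finite_cartesian_product finite_lists_length_eq) auto

lemma pat_in:
  assumes cf: "cfs xi c tau" and n: "n > 0" and K0: "\<forall>k\<ge>K0. c k \<le> int B" and i: "K0 + r + 1 \<le> i"
  shows "pat n c r i \<in> Pat n B r"
proof -
  have l1: "set (map (\<lambda>e. c (i - e)) [0..<r]) \<subseteq> {1..int B}"
  proof
    fix y assume "y \<in> set (map (\<lambda>e. c (i - e)) [0..<r])"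
    then obtain e where e: "e < r" "y = c (i - e)" by auto
    have "1 \<le> i - e" "K0 \<le> i - e" using e i by auto
    then show "y \<in> {1..int B}" using cfs_c[OF cf] K0 e by auto
  qed
  have l2: "set (map (\<lambda>e. c (Suc i + e)) [0..<r]) \<subseteq> {1..int B}"
  proof
    fix y assume "y \<in> set (map (\<lambda>e. c (Suc i + e)) [0..<r])"
    then obtain e where e: "e < r" "y = c (Suc i + e)" by auto
    have "1 \<le> Suc i + e" "K0 \<le> Suc i + e" using e i by auto
    then show "y \<in> {1..int B}" using cfs_c[OF cf] K0 e by auto
  qed
  show ?thesis unfolding Pat_def pat_def using l1 l2 n by auto
qed

lemma pat_eq:
  assumes "pat n c r i = pat n c' r i'"
  shows "QQ c (Suc i) mod int n = QQ c' (Suc i') mod int n" "QQ c i mod int n = QQ c' i' mod int n"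
    "\<forall>e<r. c (i - e) = c' (i' - e)" "\<forall>e<r. c (Suc i + e) = c' (Suc i' + e)"
  using assms unfolding pat_def by (auto simp: map_eq_conv)


lemma splice_limit:
  fixes cs :: "nat \<Rightarrow> nat \<Rightarrow> int" and taus :: "nat \<Rightarrow> nat \<Rightarrow> real" and xis x :: "nat \<Rightarrow> real"
    and K0 :: "nat \<Rightarrow> nat" and T :: "nat \<Rightarrow> nat \<Rightarrow> nat"
  assumes n: "n > 0"
    and cf: "\<forall>j. cfs (xis j) (cs j) (taus j)"
    and K0: "\<forall>j k. K0 j \<le> k \<longrightarrow> cs j k \<le> int B"
    and T: "\<forall>j m k. T j m \<le> k \<longrightarrow> PhiB n B (cs j) (taus j) k \<le> x j + 1 / real (Suc m)"
    and lo: "\<forall>j M. \<exists>k\<ge>M. PhiB n B (cs j) (taus j) k \<ge> x j - 1 / real (Suc j)"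
    and lim: "x \<longlonglongrightarrow> l"
    and lB: "l + 1 \<le> LamB B"
  shows "\<exists>xi. xi \<notin> \<rat> \<and> lambda_n n xi = ereal l"
proof -
  define Gd where "Gd j = {i. K0 j + 1 \<le> i \<and> PhiB n B (cs j) (taus j) i \<ge> x j - 1 / real (Suc j)}" for j
  have Gd_inf: "infinite (Gd j)" for j
  proof -
    have "\<forall>M. \<exists>i\<ge>M. i \<in> Gd j"
    proof
      fix M
      obtain k where "k \<ge> max M (K0 j + 1)" "PhiB n B (cs j) (taus j) k \<ge> x j - 1 / real (Suc j)"
        using lo by blast
      then show "\<exists>i\<ge>M. i \<in> Gd j" unfolding Gd_def by auto
    qed
    then show ?thesis using infinite_nat_iff_unbounded_le by blast
  qed
  define fj where "fj j r i = (if K0 j + r + 1 \<le> i then Some (pat n (cs j) r i) else None)" for j r i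
  have fj_fin: "finite (fj j (Suc r) ` Gd j)" for j r
  proof -
    have "fj j (Suc r) ` Gd j \<subseteq> insert None (Some ` Pat n B (Suc r))"
      unfolding fj_def using pat_in[OF cf[rule_format, of j] n, of "K0 j" B] K0 by auto
    then show ?thesis using Pat_finite finite_subset by blast
  qed
  have fj_none: "finite {i. fj j (Suc r) i = None}" for j r
  proof -
    have "{i. fj j (Suc r) i = None} \<subseteq> {..<K0 j + Suc r + 1}" unfolding fj_def by auto
    then show ?thesis using finite_subset by blast
  qed
  define Gs where "Gs j = nest (Gd j) (fj j)" for j
  have Gs_inf: "infinite (Gs j r)" for j r
    unfolding Gs_def by (rule nest_inf[OF Gd_inf]) (use fj_fin fj_none in auto)
  have Gs_Gd: "Gs j r \<subseteq> Gd j" for j r unfolding Gs_def by (rule nest_S)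
  have Gs_anti: "r \<le> r' \<Longrightarrow> Gs j r' \<subseteq> Gs j r" for j r r' unfolding Gs_def by (rule nest_antimono)
  have Gs_some: "fj j (Suc r) i \<noteq> None" if "i \<in> Gs j (Suc r)" for j r i
    using nest_some[OF Gd_inf, of "fj j"] fj_fin fj_none that unfolding Gs_def by blast
  define pw where "pw j r = fj j r (SOME i. i \<in> Gs j r)" for j r
  have pw_eq: "fj j (Suc r) i = pw j (Suc r)" if "i \<in> Gs j (Suc r)" for j r i
  proof -
    have ne: "\<exists>i. i \<in> Gs j (Suc r)" using Gs_inf[of j "Suc r"] by (metis finite.emptyI ex_in_conv)
    have "(SOME i. i \<in> Gs j (Suc r)) \<in> Gs j (Suc r)" by (rule someI_ex[OF ne])
    then show ?thesis unfolding pw_def Gs_def using that Gs_def nest_common by metis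
  qed
  have pw_in: "pw j (Suc r) \<in> Some ` Pat n B (Suc r)" for j r
  proof -
    obtain i where i: "i \<in> Gs j (Suc r)" using Gs_inf[of j "Suc r"] by (metis finite.emptyI ex_in_conv)
    have "fj j (Suc r) i \<noteq> None" using Gs_some[OF i] .
    then have "K0 j + Suc r + 1 \<le> i" unfolding fj_def by (auto split: if_splits)
    then have "fj j (Suc r) i \<in> Some ` Pat n B (Suc r)"
      unfolding fj_def using pat_in[OF cf[rule_format, of j] n, of "K0 j" B] K0 by auto
    then show ?thesis using pw_eq[OF i] by simp
  qed
  define g where "g r j = pw j r" for r j
  define J where "J = nest (UNIV :: nat set) g"
  have g_fin: "finite (g (Suc r) ` UNIV)" for r
  proof -
    have "g (Suc r) ` UNIV \<subseteq> Some ` Pat n B (Suc r)" unfolding g_def using pw_in by auto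
    then show ?thesis using Pat_finite finite_subset by blast
  qed
  have g_none: "finite {j. g (Suc r) j = None}" for r
  proof -
    have nn: "pw j (Suc r) \<noteq> None" for j using pw_in[of j r] by auto
    have e: "{j. g (Suc r) j = None} = {}" unfolding g_def using nn by simp
    show ?thesis unfolding e by simp
  qed
  have J_inf: "infinite (J r)" for r
    unfolding J_def by (rule nest_inf) (use g_fin g_none in auto)
  have J_anti: "r \<le> r' \<Longrightarrow> J r' \<subseteq> J r" for r r' unfolding J_def by (rule nest_antimono)
  have J_common: "j \<in> J (Suc r) \<Longrightarrow> j' \<in> J (Suc r) \<Longrightarrow> pw j (Suc r) = pw j' (Suc r)" for j j' r
    unfolding J_def using nest_common[of j UNIV g r j'] unfolding g_def by blast
  define jm where "jm = pick (\<lambda>m. J (Suc m))"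
  have jm: "jm m \<in> J (Suc m) \<and> jm m < jm (Suc m)" for m
    unfolding jm_def by (rule pick_props) (use J_inf in blast)
  have jm_mono: "strict_mono jm" using jm by (simp add: strict_mono_Suc_iff)
  have jm_ge: "jm m \<ge> m" for m using strict_mono_imp_increasing[OF jm_mono] by simp
  define p where "p m = (SOME i. i \<in> Gs (jm m) (Suc m) \<and> T (jm m) m + m + 1 \<le> i)" for m
  have p: "p m \<in> Gs (jm m) (Suc m) \<and> T (jm m) m + m + 1 \<le> p m" for m
  proof -
    have "\<exists>i. i \<in> Gs (jm m) (Suc m) \<and> T (jm m) m + m + 1 \<le> i"
      using Gs_inf[of "jm m" "Suc m"] unfolding infinite_nat_iff_unbounded_le by blast
    then show ?thesis unfolding p_def by (rule someI_ex)
  qed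
  define p' where "p' m = (SOME i. i \<in> Gs (jm m) (Suc m) \<and> p m + m + 2 \<le> i)" for m
  have p': "p' m \<in> Gs (jm m) (Suc m) \<and> p m + m + 2 \<le> p' m" for m
  proof -
    have "\<exists>i. i \<in> Gs (jm m) (Suc m) \<and> p m + m + 2 \<le> i"
      using Gs_inf[of "jm m" "Suc m"] unfolding infinite_nat_iff_unbounded_le by blast
    then show ?thesis unfolding p'_def by (rule someI_ex)
  qed
  have len: "\<forall>m. p' m \<ge> p m + m + 2" using p' by blast
  have pGd: "p m \<in> Gd (jm m)" for m using p Gs_Gd by blast
  have pK: "K0 (jm m) + 1 \<le> p m" for m using pGd[of m] unfolding Gd_def by simp
  have pm: "\<forall>m. p m \<ge> m + 1"
  proof
    fix m show "p m \<ge> m + 1" using p[of m] by linarith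
  qed
  define a where "a m = cs (jm m)" for m
  have cfa: "cfs (xis (jm m)) (a m) (taus (jm m))" for m unfolding a_def using cf by blast
  have junc_pat: "pat n (a m) (Suc m) (p' m) = pat n (a (Suc m)) (Suc m) (p (Suc m))" for m
  proof -
    have i1: "p' m \<in> Gs (jm m) (Suc m)" using p' by blast
    have "Gs (jm (Suc m)) (Suc (Suc m)) \<subseteq> Gs (jm (Suc m)) (Suc m)" by (rule Gs_anti) simp
    then have i2: "p (Suc m) \<in> Gs (jm (Suc m)) (Suc m)" using p[of "Suc m"] by blast
    have "J (Suc (Suc m)) \<subseteq> J (Suc m)" by (rule J_anti) simp
    then have "jm (Suc m) \<in> J (Suc m)" using jm[of "Suc m"] by blast
    then have pwq: "pw (jm m) (Suc m) = pw (jm (Suc m)) (Suc m)" using J_common jm by blast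
    have f1: "fj (jm m) (Suc m) (p' m) = fj (jm (Suc m)) (Suc m) (p (Suc m))"
      using pw_eq[OF i1] pw_eq[OF i2] pwq by simp
    have n1: "K0 (jm m) + Suc m + 1 \<le> p' m" using Gs_some[OF i1] unfolding fj_def by (auto split: if_splits)
    have n2: "K0 (jm (Suc m)) + Suc m + 1 \<le> p (Suc m)" using Gs_some[OF i2] unfolding fj_def by (auto split: if_splits)
    show ?thesis using f1 n1 n2 unfolding fj_def a_def by simp
  qed
  have junc: "\<forall>m e. e < Suc m \<longrightarrow> a m (p' m - e) = a (Suc m) (p (Suc m) - e)
                        \<and> a m (p' m + 1 + e) = a (Suc m) (p (Suc m) + 1 + e)"
    using pat_eq(3,4)[OF junc_pat] by simp
  have Qjunc: "QQ (a m) (Suc (p' m)) mod int n = QQ (a (Suc m)) (Suc (p (Suc m))) mod int n \<and>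
               QQ (a m) (p' m) mod int n = QQ (a (Suc m)) (p (Suc m)) mod int n" for m
    using pat_eq(1,2)[OF junc_pat[of m]] by simp
  define cc where "cc = splice a p p'"
  have cc_seg: "cc i = a m (i - Ps p p' m + p m)" if "Ps p p' m < i" "i \<le> Ps p p' (Suc m)" for m i
    unfolding cc_def by (rule splice_seg[OF len that])
  have cc_pre: "cc i = a 0 i" if "i \<le> Ps p p' 1" for i
    unfolding cc_def by (rule splice_prefix[OF len that])
  have Ps01: "Ps p p' 0 < Ps p p' 1" using len[rule_format, of 0] by simp
  have cc_val: "\<exists>m idx. cc k = a m idx \<and> (k \<le> Ps p p' 0 \<longrightarrow> idx = k) \<and> (Ps p p' 0 < k \<longrightarrow> p m < idx)" for k
  proof (cases "k \<le> Ps p p' 0")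
    case True then show ?thesis using cc_pre[of k] Ps01 by auto
  next
    case False
    then obtain m where m: "Ps p p' m < k" "k \<le> Ps p p' (Suc m)" using seg_exists[OF len, of k] by auto
    then show ?thesis using cc_seg[OF m] False by (intro exI[of _ m] exI[of _ "k - Ps p p' m + p m"]) auto
  qed
  have cc_pos: "\<forall>k\<ge>1. cc k \<ge> 1"
  proof (intro allI impI)
    fix k :: nat assume k: "k \<ge> 1"
    obtain m idx where mi: "cc k = a m idx" "k \<le> Ps p p' 0 \<longrightarrow> idx = k" "Ps p p' 0 < k \<longrightarrow> p m < idx"
      using cc_val by blast
    have "idx \<ge> 1" using mi k by (cases "k \<le> Ps p p' 0") auto
    then show "cc k \<ge> 1" using cfs_c[OF cfa] mi by simp
  qed
  have cc_B: "\<forall>k\<ge>Ps p p' 0 + 1. cc k \<le> int B"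
  proof (intro allI impI)
    fix k :: nat assume k: "k \<ge> Ps p p' 0 + 1"
    obtain m idx where mi: "cc k = a m idx" "Ps p p' 0 < k \<longrightarrow> p m < idx"
      using cc_val by blast
    have "K0 (jm m) \<le> idx" using mi k pK[of m] by simp
    then show "cc k \<le> int B" using K0 mi unfolding a_def by simp
  qed
  obtain tauc where cfc: "cfs (real_of_int (cc 0) + tauc 1) cc tauc" using cf_construct[OF cc_pos] by blast
  define xic where "xic = real_of_int (cc 0) + tauc 1"
  have cfc': "cfs xic cc tauc" unfolding xic_def by (rule cfc)
  have seg_run: "QQ cc (Ps p p' m + s) mod int n = QQ (a m) (p m + s) mod int n \<and>
      QQ cc (Suc (Ps p p' m + s)) mod int n = QQ (a m) (Suc (p m + s)) mod int n"
    if S: "QQ cc (Ps p p' m) mod int n = QQ (a m) (p m) mod int n \<and>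
           QQ cc (Suc (Ps p p' m)) mod int n = QQ (a m) (Suc (p m)) mod int n"
      and sl: "s \<le> p' m - p m" for m s
  proof (rule QQ_mod_run)
    show "QQ cc (Ps p p' m) mod int n = QQ (a m) (p m) mod int n" using S by simp
    show "QQ cc (Suc (Ps p p' m)) mod int n = QQ (a m) (Suc (p m)) mod int n" using S by simp
    show "\<forall>t. 1 \<le> t \<and> t \<le> s \<longrightarrow> cc (Ps p p' m + t) = a m (p m + t)"
    proof (intro allI impI)
      fix t assume t: "1 \<le> t \<and> t \<le> s"
      have "cc (Ps p p' m + t) = a m (Ps p p' m + t - Ps p p' m + p m)"
        by (rule cc_seg) (use t sl in auto)
      then show "cc (Ps p p' m + t) = a m (p m + t)" by (simp add: add.commute)
    qed
  qed
  have state: "QQ cc (Ps p p' m) mod int n = QQ (a m) (p m) mod int n \<and>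
           QQ cc (Suc (Ps p p' m)) mod int n = QQ (a m) (Suc (p m)) mod int n" for m
  proof (induction m)
    case 0
    have "\<forall>i\<le>Ps p p' 0. cc i = a 0 i" using cc_pre Ps01 by simp
    then show ?case using QQ_local[of "Ps p p' 0" cc "a 0"] by simp
  next
    case (Suc m)
    have "QQ cc (Ps p p' m + (p' m - p m)) mod int n = QQ (a m) (p m + (p' m - p m)) mod int n \<and>
      QQ cc (Suc (Ps p p' m + (p' m - p m))) mod int n = QQ (a m) (Suc (p m + (p' m - p m))) mod int n"
      by (rule seg_run[OF Suc]) simp
    moreover have "p m + (p' m - p m) = p' m" using len[rule_format, of m] by simp
    ultimately show ?case using Qjunc[of m] by simp
  qed
  have cmp: "\<exists>M0. \<forall>m\<ge>M0. \<forall>i. Ps p p' m \<le> i \<and> i \<le> Ps p p' (Suc m) \<longrightarrow>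
      \<bar>PhiB n B cc tauc i - PhiB n B (a m) (taus (jm m)) (i - Ps p p' m + p m)\<bar> < e" if e: "e > 0" for e
  proof -
    obtain j0 where W: "\<forall>xi c tau xi' c' tau' i i'. cfs xi c tau \<longrightarrow> cfs xi' c' tau' \<longrightarrow> 2*j0 \<le> i \<longrightarrow> 2*j0 \<le> i'
      \<longrightarrow> 1 \<le> i \<longrightarrow> 1 \<le> i'
      \<longrightarrow> (\<forall>e<2*j0. c (i - e) = c' (i' - e)) \<longrightarrow> (\<forall>e<2*j0. c (Suc i + e) = c' (Suc i' + e))
      \<longrightarrow> QQ c (Suc i) mod int n = QQ c' (Suc i') mod int n \<longrightarrow> QQ c i mod int n = QQ c' i' mod int n
      \<longrightarrow> c i \<le> int B \<longrightarrow> c' i' \<le> int B \<longrightarrow> c (Suc i) \<le> int B \<longrightarrow> c' (Suc i') \<le> int B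
      \<longrightarrow> \<bar>PhiB n B c tau i - PhiB n B c' tau' i'\<bar> < e"
      using WIN[OF n e, of B] by blast
    have "\<forall>m\<ge>max 1 (2*j0). \<forall>i. Ps p p' m \<le> i \<and> i \<le> Ps p p' (Suc m) \<longrightarrow>
      \<bar>PhiB n B cc tauc i - PhiB n B (a m) (taus (jm m)) (i - Ps p p' m + p m)\<bar> < e"
    proof (intro allI impI)
      fix m i assume m: "max 1 (2*j0) \<le> m" and i: "Ps p p' m \<le> i \<and> i \<le> Ps p p' (Suc m)"
      define i' where "i' = i - Ps p p' m + p m"
      have Psm: "Ps p p' m \<ge> m" using Ps_ge[OF len] by blast
      have pmm: "p m \<ge> m + 1" using pm by blast
      have ii: "2*j0 \<le> i" "2*j0 \<le> i'" "1 \<le> i" "1 \<le> i'" using m i Psm pmm unfolding i'_def by auto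
      have wl: "\<forall>e<2*j0. cc (i - e) = a m (i' - e)"
        using splice_window(1)[OF len junc pm, of m i "2*j0"] m i unfolding cc_def i'_def by auto
      have wr: "\<forall>e<2*j0. cc (Suc i + e) = a m (Suc i' + e)"
        using splice_window(2)[OF len junc pm, of m i "2*j0"] m i unfolding cc_def i'_def by auto
      have sl: "i - Ps p p' m \<le> p' m - p m" using i by (simp add: le_diff_conv)
      have q: "QQ cc i mod int n = QQ (a m) i' mod int n \<and> QQ cc (Suc i) mod int n = QQ (a m) (Suc i') mod int n"
        using seg_run[OF state sl] i unfolding i'_def by (simp add: add.commute)
      have "Ps p p' 1 \<le> Ps p p' m" by (rule Ps_mono[OF len]) (use m in simp)
      then have iP: "Ps p p' 0 + 1 \<le> i" using Ps01 i by simp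
      have b1: "cc i \<le> int B" "cc (Suc i) \<le> int B" using cc_B iP by auto
      have "K0 (jm m) \<le> i'" using pK[of m] unfolding i'_def by simp
      then have b2: "a m i' \<le> int B" "a m (Suc i') \<le> int B" using K0 unfolding a_def by auto
      have "\<bar>PhiB n B cc tauc i - PhiB n B (a m) (taus (jm m)) i'\<bar> < e"
        using W cfc' cfa[of m] ii wl wr q b1 b2 by blast
      then show "\<bar>PhiB n B cc tauc i - PhiB n B (a m) (taus (jm m)) (i - Ps p p' m + p m)\<bar> < e"
        unfolding i'_def .
    qed
    then show ?thesis by blast
  qed
  have xjm: "(\<lambda>m. x (jm m)) \<longlonglongrightarrow> l"
    using LIMSEQ_subseq_LIMSEQ[OF lim jm_mono] by (simp add: comp_def)
  have aux: "\<exists>Mm. \<forall>m\<ge>Mm. \<bar>x (jm m) - l\<bar> < e \<and> 1 / real (Suc m) < e \<and>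
      (\<forall>i. Ps p p' m \<le> i \<and> i \<le> Ps p p' (Suc m) \<longrightarrow>
      \<bar>PhiB n B cc tauc i - PhiB n B (a m) (taus (jm m)) (i - Ps p p' m + p m)\<bar> < e)" if e: "e > 0" for e
  proof -
    obtain M0 where M0: "\<forall>m\<ge>M0. \<forall>i. Ps p p' m \<le> i \<and> i \<le> Ps p p' (Suc m) \<longrightarrow>
      \<bar>PhiB n B cc tauc i - PhiB n B (a m) (taus (jm m)) (i - Ps p p' m + p m)\<bar> < e"
      using cmp[OF e] by blast
    obtain M1 where M1: "\<forall>m\<ge>M1. norm (x (jm m) - l) < e" using LIMSEQ_D[OF xjm e] by blast
    obtain M2 :: nat where M2: "1 / e < real M2" using reals_Archimedean2 by blast
    have "\<forall>m\<ge>M2. 1 / real (Suc m) < e"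
    proof (intro allI impI)
      fix m assume "m \<ge> M2"
      then have "1 / e < real (Suc m)" using M2 by simp
      then show "1 / real (Suc m) < e" using e by (simp add: divide_less_eq mult.commute)
    qed
    then show ?thesis using M0 M1 by (intro exI[of _ "max M0 (max M1 M2)"]) auto
  qed
  have up: "\<forall>e>0. \<exists>M. \<forall>k\<ge>M. PhiB n B cc tauc k \<le> l + e"
  proof (intro allI impI)
    fix e :: real assume e: "e > 0"
    obtain Mm where Mm: "\<forall>m\<ge>Mm. \<bar>x (jm m) - l\<bar> < e/3 \<and> 1 / real (Suc m) < e/3 \<and>
      (\<forall>i. Ps p p' m \<le> i \<and> i \<le> Ps p p' (Suc m) \<longrightarrow>
      \<bar>PhiB n B cc tauc i - PhiB n B (a m) (taus (jm m)) (i - Ps p p' m + p m)\<bar> < e/3)"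
      using aux[of "e/3"] e by auto
    have "\<forall>k\<ge>Suc (Ps p p' Mm). PhiB n B cc tauc k \<le> l + e"
    proof (intro allI impI)
      fix k assume k: "k \<ge> Suc (Ps p p' Mm)"
      have "Ps p p' 0 \<le> Ps p p' Mm" by (rule Ps_mono[OF len]) simp
      then obtain m where m: "Ps p p' m < k" "k \<le> Ps p p' (Suc m)" using seg_exists[OF len, of k] k by auto
      have mM: "m \<ge> Mm"
      proof (rule ccontr)
        assume "\<not> m \<ge> Mm"
        then have "Ps p p' (Suc m) \<le> Ps p p' Mm" by (intro Ps_mono[OF len]) simp
        then show False using m k by simp
      qed
      have c1: "\<bar>PhiB n B cc tauc k - PhiB n B (a m) (taus (jm m)) (k - Ps p p' m + p m)\<bar> < e/3"
        using Mm mM m by auto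
      have "T (jm m) m \<le> k - Ps p p' m + p m" using p[of m] by simp
      then have c2: "PhiB n B (a m) (taus (jm m)) (k - Ps p p' m + p m) \<le> x (jm m) + 1 / real (Suc m)"
        using T unfolding a_def by blast
      have c3: "\<bar>x (jm m) - l\<bar> < e/3" "1 / real (Suc m) < e/3" using Mm mM by auto
      show "PhiB n B cc tauc k \<le> l + e" using c1 c2 c3 by linarith
    qed
    then show "\<exists>M. \<forall>k\<ge>M. PhiB n B cc tauc k \<le> l + e" by blast
  qed
  have low: "\<forall>e>0. \<forall>M. \<exists>k\<ge>M. PhiB n B cc tauc k \<ge> l - e"
  proof (intro allI impI)
    fix e :: real and M :: nat assume e: "e > 0"
    obtain Mm where Mm: "\<forall>m\<ge>Mm. \<bar>x (jm m) - l\<bar> < e/3 \<and> 1 / real (Suc m) < e/3 \<and>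
      (\<forall>i. Ps p p' m \<le> i \<and> i \<le> Ps p p' (Suc m) \<longrightarrow>
      \<bar>PhiB n B cc tauc i - PhiB n B (a m) (taus (jm m)) (i - Ps p p' m + p m)\<bar> < e/3)"
      using aux[of "e/3"] e by auto
    define m where "m = max Mm M"
    have mM: "m \<ge> Mm" "m \<ge> M" unfolding m_def by auto
    have "Ps p p' m \<le> Ps p p' (Suc m)" by (rule Ps_mono[OF len]) simp
    then have c1: "\<bar>PhiB n B cc tauc (Ps p p' m) - PhiB n B (a m) (taus (jm m)) (p m)\<bar> < e/3"
      using Mm mM by fastforce
    have c2: "PhiB n B (a m) (taus (jm m)) (p m) \<ge> x (jm m) - 1 / real (Suc (jm m))"
      using pGd[of m] unfolding Gd_def a_def by simp
    have "1 / real (Suc (jm m)) \<le> 1 / real (Suc m)" using jm_ge[of m] by (simp add: frac_le)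
    moreover have c3: "\<bar>x (jm m) - l\<bar> < e/3" "1 / real (Suc m) < e/3" using Mm mM by auto
    ultimately have "PhiB n B cc tauc (Ps p p' m) \<ge> l - e" using c1 c2 by linarith
    moreover have "Ps p p' m \<ge> M" using Ps_ge[OF len, of m] mM by simp
    ultimately show "\<exists>k\<ge>M. PhiB n B cc tauc k \<ge> l - e" by blast
  qed
  have "lambda_n n xic = ereal l"
    by (rule F2[OF cfc' n _ lB up low]) (use cc_B in blast)
  moreover have "xic \<notin> \<rat>" by (rule cfs_irrational[OF cfc'])
  ultimately show ?thesis by blast
qed


theorem proposition5p1:
  fixes n :: nat
  assumes "n > 0"
  shows "closed (L_set n)"
proof -
  have n: "n > 0" by (rule assms)
  have main: "l \<in> L_set n" if xs: "\<forall>j. x j \<in> L_set n" and lim: "x \<longlonglongrightarrow> l" for x l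
  proof -
    have "\<forall>j. \<exists>xi. xi \<notin> \<rat> \<and> lambda_n n xi = ereal (x j)" using xs unfolding L_set_def by blast
    then obtain xis where xis: "\<forall>j. xis j \<notin> \<rat> \<and> lambda_n n (xis j) = ereal (x j)" by (rule choice[THEN exE]) blast
    have "\<forall>j. \<exists>ct. cfs (xis j) (fst ct) (snd ct)"
    proof
      fix j
      obtain c tau where "cfs (xis j) c tau" using exists_cfs xis by blast
      then show "\<exists>ct. cfs (xis j) (fst ct) (snd ct)" by (intro exI[of _ "(c, tau)"]) simp
    qed
    then obtain ct where ct: "\<forall>j. cfs (xis j) (fst (ct j)) (snd (ct j))" by (rule choice[THEN exE]) blast
    define cs where "cs j = fst (ct j)" for j
    define taus where "taus j = snd (ct j)" for j
    have cf: "\<forall>j. cfs (xis j) (cs j) (taus j)" unfolding cs_def taus_def using ct by blast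
    have "Bseq x" using lim convergent_imp_Bseq convergent_def by blast
    then obtain K where K: "K > 0" "\<forall>j. norm (x j) \<le> K" using BseqE by metis
    have xK: "x j \<le> K" for j using K(2)[rule_format, of j] by simp
    have lK: "l \<le> K" by (rule LIMSEQ_le_const2[OF lim]) (use xK in auto)
    define B where "B = nat \<lceil>K\<rceil> + 2"
    have BK: "real B \<ge> K + 2" unfolding B_def using K(1) by linarith
    have xB: "x j + 1 \<le> real B" for j using xK[of j] BK by simp
    have xL: "x j + 1 \<le> LamB B" for j using xB[of j] unfolding LamB_def by simp
    have lB: "l + 1 \<le> LamB B" using lK BK unfolding LamB_def by simp
    have "\<forall>j. \<exists>K0. \<forall>k\<ge>K0. cs j k \<le> int B"
    proof
      fix j show "\<exists>K0. \<forall>k\<ge>K0. cs j k \<le> int B"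
        by (rule tail_bound[OF cf[rule_format, of j] n _ xB[of j]]) (use xis in blast)
    qed
    then obtain K0 where K0: "\<forall>j. \<forall>k\<ge>K0 j. cs j k \<le> int B" by (rule choice[THEN exE]) blast
    have "\<forall>j. \<exists>Tj. \<forall>m. \<forall>k\<ge>Tj m. PhiB n B (cs j) (taus j) k \<le> x j + 1 / real (Suc m)"
    proof
      fix j
      have "\<forall>m. \<exists>M. \<forall>k\<ge>M. PhiB n B (cs j) (taus j) k \<le> x j + 1 / real (Suc m)"
      proof
        fix m
        have "1 / real (Suc m) > 0" by simp
        then show "\<exists>M. \<forall>k\<ge>M. PhiB n B (cs j) (taus j) k \<le> x j + 1 / real (Suc m)"
          using F1a[OF cf[rule_format, of j] n, of "x j" B] xis by blast
      qed
      then show "\<exists>Tj. \<forall>m. \<forall>k\<ge>Tj m. PhiB n B (cs j) (taus j) k \<le> x j + 1 / real (Suc m)"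
        by (rule choice)
    qed
    then obtain T where T: "\<forall>j. \<forall>m. \<forall>k\<ge>T j m. PhiB n B (cs j) (taus j) k \<le> x j + 1 / real (Suc m)"
      by (rule choice[THEN exE]) blast
    have lo: "\<forall>j M. \<exists>k\<ge>M. PhiB n B (cs j) (taus j) k \<ge> x j - 1 / real (Suc j)"
    proof (intro allI)
      fix j M
      have e: "1 / real (Suc j) > 0" by simp
      have "\<forall>e>0. \<forall>M. \<exists>k\<ge>M. PhiB n B (cs j) (taus j) k \<ge> x j - e"
        by (rule F1b[OF cf[rule_format, of j] n _ xL[of j]]) (use xis K0 in blast)+
      then show "\<exists>k\<ge>M. PhiB n B (cs j) (taus j) k \<ge> x j - 1 / real (Suc j)" using e by blast
    qed
    have "\<exists>xi. xi \<notin> \<rat> \<and> lambda_n n xi = ereal l"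
      by (rule splice_limit[OF n cf _ _ lo lim lB, of K0 T]) (use K0 T in auto)
    then show ?thesis unfolding L_set_def by blast
  qed
  show ?thesis unfolding closed_sequential_limits using main by blast
qed


end
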